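(* Let $G$ be a finite, simple, connected graph of order $n$ which contains a cycle. Then $\beta(G)=n-g(G)+2$ if and only if $G$ is a cycle $C_n$, a complete graph $K_n$ with $n\geq 3$, or a complete bipartite graph $K_{r,s}$ with $r,s\geq 2$.
   Context: For vertices $x,y$ of a connected graph $G$, $d(x,y)$ denotes the length of a shortest $x$–$y$ path. A set $W\subseteq V(G)$ is a resolving set for $G$ if for every two distinct vertices $u,v\in V(G)$ there exists $w\in W$ with $d(u,w)\neq d(v,w)$. The metric dimension $\beta(G)$ is the minimum cardinality of a resolving set for $G$. The girth $g(G)$ is the length of a shortest cycle in $G$. *)

theory Defs
  imports Main
begin

definition simple_graph :: "'a set \<Rightarrow> ('a \<Rightarrow> 'a \<Rightarrow> bool) \<Rightarrow> bool" where
  "simple_graph V E \<longleftrightarrow> finite V \<and> (\<forall>x y. E x y \<longrightarrow> x \<in> V \<and> y \<in> V)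
     \<and> (\<forall>x y. E x y \<longrightarrow> E y x) \<and> (\<forall>x. \<not> E x x)"

text \<open>A walk given as list of vertices; its length is the number of edges.\<close>
definition walk :: "'a set \<Rightarrow> ('a \<Rightarrow> 'a \<Rightarrow> bool) \<Rightarrow> 'a list \<Rightarrow> bool" where
  "walk V E p \<longleftrightarrow> p \<noteq> [] \<and> set p \<subseteq> V \<and> (\<forall>i. Suc i < length p \<longrightarrow> E (p ! i) (p ! Suc i))"

definition connected_graph :: "'a set \<Rightarrow> ('a \<Rightarrow> 'a \<Rightarrow> bool) \<Rightarrow> bool" where
  "connected_graph V E \<longleftrightarrow> V \<noteq> {} \<and>
     (\<forall>x\<in>V. \<forall>y\<in>V. \<exists>p. walk V E p \<and> hd p = x \<and> last p = y)"

definition dist :: "'a set \<Rightarrow> ('a \<Rightarrow> 'a \<Rightarrow> bool) \<Rightarrow> 'a \<Rightarrow> 'a \<Rightarrow> nat" where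
  "dist V E x y = (LEAST k. \<exists>p. walk V E p \<and> hd p = x \<and> last p = y \<and> length p = Suc k)"

definition resolving_set :: "'a set \<Rightarrow> ('a \<Rightarrow> 'a \<Rightarrow> bool) \<Rightarrow> 'a set \<Rightarrow> bool" where
  "resolving_set V E W \<longleftrightarrow> W \<subseteq> V \<and>
     (\<forall>u\<in>V. \<forall>v\<in>V. u \<noteq> v \<longrightarrow> (\<exists>w\<in>W. dist V E u w \<noteq> dist V E v w))"

definition metric_dim :: "'a set \<Rightarrow> ('a \<Rightarrow> 'a \<Rightarrow> bool) \<Rightarrow> nat" where
  "metric_dim V E = (LEAST k. \<exists>W. resolving_set V E W \<and> card W = k)"

definition is_cycle :: "'a set \<Rightarrow> ('a \<Rightarrow> 'a \<Rightarrow> bool) \<Rightarrow> 'a list \<Rightarrow> bool" where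
  "is_cycle V E c \<longleftrightarrow> length c \<ge> 3 \<and> distinct c \<and> set c \<subseteq> V \<and>
     (\<forall>i < length c. E (c ! i) (c ! (Suc i mod length c)))"

definition has_cycle :: "'a set \<Rightarrow> ('a \<Rightarrow> 'a \<Rightarrow> bool) \<Rightarrow> bool" where
  "has_cycle V E \<longleftrightarrow> (\<exists>c. is_cycle V E c)"

definition girth :: "'a set \<Rightarrow> ('a \<Rightarrow> 'a \<Rightarrow> bool) \<Rightarrow> nat" where
  "girth V E = (LEAST k. \<exists>c. is_cycle V E c \<and> length c = k)"

definition graph_iso :: "'a set \<Rightarrow> ('a \<Rightarrow> 'a \<Rightarrow> bool) \<Rightarrow> 'b set \<Rightarrow> ('b \<Rightarrow> 'b \<Rightarrow> bool) \<Rightarrow> bool" where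
  "graph_iso V E V' E' \<longleftrightarrow> (\<exists>f. bij_betw f V V' \<and>
     (\<forall>x\<in>V. \<forall>y\<in>V. E x y \<longleftrightarrow> E' (f x) (f y)))"

definition cycle_graph :: "nat \<Rightarrow> nat set \<times> (nat \<Rightarrow> nat \<Rightarrow> bool)" where
  "cycle_graph n = ({0..<n}, \<lambda>i j. i < n \<and> j < n \<and> i \<noteq> j \<and>
      (j = Suc i mod n \<or> i = Suc j mod n))"

definition complete_graph :: "nat \<Rightarrow> nat set \<times> (nat \<Rightarrow> nat \<Rightarrow> bool)" where
  "complete_graph n = ({0..<n}, \<lambda>i j. i < n \<and> j < n \<and> i \<noteq> j)"

definition complete_bipartite :: "nat \<Rightarrow> nat \<Rightarrow> (nat \<times> nat) set \<times> (nat \<times> nat \<Rightarrow> nat \<times> nat \<Rightarrow> bool)" where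
  "complete_bipartite r s = ({0..<r} \<times> {0} \<union> {0..<s} \<times> {1},
      \<lambda>(i,a) (j,b). ((a = 0 \<and> i < r \<and> b = 1 \<and> j < s) \<or> (a = 1 \<and> i < s \<and> b = 0 \<and> j < r)))"

end

theory Submission imports Defs begin

definition cd :: "nat \<Rightarrow> nat \<Rightarrow> nat \<Rightarrow> nat" where
  "cd n i j = (if i \<le> j then min (j - i) (n - (j - i)) else min (i - j) (n - (i - j)))"

lemma cd0: "cd n 0 i = min i (n - i)" by (simp add: cd_def)
lemma cd1: "cd n 1 i = (if i = 0 then min 1 (n - 1) else min (i - 1) (n - (i - 1)))" by (simp add: cd_def)

lemma feq: fixes i j n :: nat assumes m: "min i (n - i) = min j (n - j)" and "i \<le> n" "j \<le> n" shows "i = j \<or> j = n - i"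
proof (cases "i \<le> n - i")
  case T1: True
  show ?thesis
  proof (cases "j \<le> n - j")
    case True thus ?thesis using T1 m by (simp add: min_def)
  next
    case False
    hence "i = n - j" using T1 m by (simp add: min_def)
    thus ?thesis using assms(2,3) by arith
  qed
next
  case F1: False
  show ?thesis
  proof (cases "j \<le> n - j")
    case True
    hence "n - i = j" using F1 m by (simp add: min_def)
    thus ?thesis using assms(2,3) by arith
  next
    case False
    hence "n - i = n - j" using F1 m by (simp add: min_def)
    thus ?thesis using assms(2,3) by arith
  qed
qed

lemma cd_one: "3 \<le> n \<Longrightarrow> i < n \<Longrightarrow> cd n 0 i = 1 \<Longrightarrow> i = 1 \<or> i = n - 1"
  unfolding cd0 by (metis min_def diff_diff_cancel less_imp_le_nat)

lemma cd_two: "i < n \<Longrightarrow> cd n 0 i \<le> 2 \<Longrightarrow> i \<le> 2 \<or> i + 2 \<ge> n"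
  unfolding cd0 min_le_iff_disj by linarith

lemma geq2: fixes i n :: nat assumes m: "min (i - 1) (n - (i - 1)) = min (n - i - 1) (n - (n - i - 1))"
  and "1 \<le> i" "i < n" shows "2 * i = n"
proof -
  have a: "min (i - 1) (n - (i - 1)) = i - 1 \<or> min (i - 1) (n - (i - 1)) = n - (i - 1)" by (simp add: min_def)
  have b: "min (n - i - 1) (n - (n - i - 1)) = n - i - 1 \<or> min (n - i - 1) (n - (n - i - 1)) = n - (n - i - 1)" by (simp add: min_def)
  show ?thesis
  proof (rule disjE[OF a]; rule disjE[OF b])
    assume "min (i - 1) (n - (i - 1)) = i - 1" "min (n - i - 1) (n - (n - i - 1)) = n - i - 1"
    hence "i - 1 = n - i - 1" using m by simp
    thus ?thesis using assms(2,3) by arith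
  next
    assume "min (i - 1) (n - (i - 1)) = i - 1" "min (n - i - 1) (n - (n - i - 1)) = n - (n - i - 1)"
    hence "i - 1 = n - (n - i - 1)" using m by simp
    thus ?thesis using assms(2,3) by arith
  next
    assume "min (i - 1) (n - (i - 1)) = n - (i - 1)" "min (n - i - 1) (n - (n - i - 1)) = n - i - 1"
    hence "n - (i - 1) = n - i - 1" using m by simp
    thus ?thesis using assms(2,3) by arith
  next
    assume "min (i - 1) (n - (i - 1)) = n - (i - 1)" "min (n - i - 1) (n - (n - i - 1)) = n - (n - i - 1)"
    hence "n - (i - 1) = n - (n - i - 1)" using m by simp
    thus ?thesis using assms(2,3) by arith
  qed
qed

lemma cd_res: assumes "3 \<le> n" "i < n" "j < n" "i \<noteq> j" shows "cd n 0 i \<noteq> cd n 0 j \<or> cd n 1 i \<noteq> cd n 1 j"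
proof (rule ccontr)
  assume "\<not> ?thesis"
  hence e0: "min i (n - i) = min j (n - j)" and e1: "cd n 1 i = cd n 1 j" unfolding cd0 by auto
  have j: "j = n - i" using feq[OF e0] assms by auto
  have i0: "i \<noteq> 0" using j assms by auto
  have "n - i \<noteq> 0" using assms by auto
  hence "min (i - 1) (n - (i - 1)) = min (n - i - 1) (n - (n - i - 1))" using e1 i0 j unfolding cd1 by simp
  hence "2 * i = n" using geq2 i0 assms by auto
  thus False using j assms by auto
qed

lemma cd_sym: "cd n i j = cd n j i" unfolding cd_def by auto

lemma Suc_mod_eq: "i < n \<Longrightarrow> Suc i mod n = (if Suc i = n then 0 else Suc i)"
  by auto

lemma cd_adj: "i < n \<Longrightarrow> j < n \<Longrightarrow> cd n i j = 1 \<Longrightarrow> j = Suc i mod n \<or> i = Suc j mod n"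
  unfolding cd_def min_def Suc_mod_eq by (simp add: Suc_mod_eq split: if_split_asm; linarith)

locale sg =
  fixes V :: "'a set" and E :: "'a \<Rightarrow> 'a \<Rightarrow> bool"
  assumes sg: "simple_graph V E" and cg: "connected_graph V E"
begin

abbreviation "d \<equiv> dist V E"

lemma finV: "finite V" using sg by (simp add: simple_graph_def)
lemma EV1: "E x y \<Longrightarrow> x \<in> V" using sg by (simp add: simple_graph_def)
lemma EV2: "E x y \<Longrightarrow> y \<in> V" using sg by (simp add: simple_graph_def)
lemma Esym: "E x y \<Longrightarrow> E y x" using sg by (simp add: simple_graph_def)
lemma Eirr: "\<not> E x x" using sg by (simp add: simple_graph_def)
lemma Eneq: "E x y \<Longrightarrow> x \<noteq> y" using Eirr by auto

definition fw :: "'a \<Rightarrow> 'a \<Rightarrow> nat \<Rightarrow> (nat \<Rightarrow> 'a) \<Rightarrow> bool" where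
  "fw x y L f \<longleftrightarrow> f 0 = x \<and> f L = y \<and> (\<forall>i\<le>L. f i \<in> V) \<and> (\<forall>i<L. E (f i) (f (Suc i)))"

lemma fw_dist: assumes "fw x y L f" shows "d x y \<le> L"
proof -
  let ?p = "map f [0..<Suc L]"
  have w: "walk V E ?p" using assms unfolding walk_def fw_def
    by (auto simp del: upt_Suc simp: nth_append)
  have "hd ?p = x" using assms by (simp add: fw_def hd_map del: upt_Suc)
  moreover have "last ?p = y" using assms by (simp add: fw_def last_map del: upt_Suc)
  ultimately show ?thesis unfolding dist_def using w
    by (intro Least_le) (rule exI[of _ ?p], simp)
qed

lemma walk_ex: assumes "x \<in> V" "y \<in> V" shows "\<exists>p. walk V E p \<and> hd p = x \<and> last p = y"
  using cg assms by (auto simp: connected_graph_def)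

lemma dist_fw: assumes "x \<in> V" "y \<in> V" shows "\<exists>f. fw x y (d x y) f"
proof -
  obtain p where p: "walk V E p" "hd p = x" "last p = y" using walk_ex[OF assms] by blast
  have "\<exists>k p. walk V E p \<and> hd p = x \<and> last p = y \<and> length p = Suc k"
    using p by (intro exI[of _ "length p - 1"] exI[of _ p]) (auto simp: walk_def)
  hence "\<exists>p. walk V E p \<and> hd p = x \<and> last p = y \<and> length p = Suc (d x y)"
    unfolding dist_def by (rule LeastI_ex)
  then obtain q where q: "walk V E q" "hd q = x" "last q = y" "length q = Suc (d x y)" by blast
  have "fw x y (d x y) (\<lambda>i. q ! i)" unfolding fw_def
  proof (intro conjI allI impI)
    show "q ! 0 = x" using q by (metis hd_conv_nth list.size(3) nat.simps(3))
    show "q ! d x y = y" using q by (metis diff_Suc_1 last_conv_nth list.size(3) nat.simps(3))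
    show "q ! i \<in> V" if "i \<le> d x y" for i using q(1,4) that unfolding walk_def
      by (metis le_imp_less_Suc nth_mem subsetD)
    show "E (q ! i) (q ! Suc i)" if "i < d x y" for i using q that unfolding walk_def by auto
  qed
  thus ?thesis by blast
qed

lemma fw_refl: "x \<in> V \<Longrightarrow> fw x x 0 (\<lambda>_. x)" by (simp add: fw_def)
lemma fw_edge: "E x y \<Longrightarrow> fw x y 1 (\<lambda>i. if i = 0 then x else y)"
  by (auto simp: fw_def EV1 EV2)
lemma fw_cat: assumes f: "fw x y L f" and g: "fw y z M g"
  shows "fw x z (L+M) (\<lambda>i. if i \<le> L then f i else g (i - L))"
  unfolding fw_def
proof (intro conjI allI impI)
  show "(if 0 \<le> L then f 0 else g (0 - L)) = x" using f by (simp add: fw_def)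
  show "(if L + M \<le> L then f (L + M) else g (L + M - L)) = z" using f g by (cases M) (auto simp: fw_def)
  show "(if i \<le> L then f i else g (i - L)) \<in> V" if "i \<le> L + M" for i
    using f g that by (auto simp: fw_def)
  show "E (if i \<le> L then f i else g (i - L)) (if Suc i \<le> L then f (Suc i) else g (Suc i - L))"
    if "i < L + M" for i
  proof (cases "Suc i \<le> L")
    case True thus ?thesis using f by (simp add: fw_def)
  next
    case False
    show ?thesis
    proof (cases "i = L")
      case True
      have "0 < M" using that True by simp
      hence "E (g 0) (g (Suc 0))" using g unfolding fw_def by blast
      thus ?thesis using f g True by (simp add: fw_def)
    next
      case False
      hence "i > L" using \<open>\<not> Suc i \<le> L\<close> by simp
      thus ?thesis using g that by (simp add: fw_def Suc_diff_le)
    qed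
  qed
qed
lemma fw_rev: assumes f: "fw x y L f" shows "fw y x L (\<lambda>i. f (L - i))"
  unfolding fw_def
proof (intro conjI allI impI)
  show "f (L - 0) = y" "f (L - L) = x" using f by (auto simp: fw_def)
  show "f (L - i) \<in> V" if "i \<le> L" for i using f by (auto simp: fw_def)
  show "E (f (L - i)) (f (L - Suc i))" if "i < L" for i
  proof -
    have "E (f (L - Suc i)) (f (Suc (L - Suc i)))" using f that by (auto simp: fw_def)
    moreover have "Suc (L - Suc i) = L - i" using that by simp
    ultimately show ?thesis using Esym by simp
  qed
qed
lemma fw_take: assumes "fw x y L f" "k \<le> L" shows "fw x (f k) k f"
  using assms unfolding fw_def by auto
lemma fw_drop: assumes "fw x y L f" "k \<le> L" shows "fw (f k) y (L - k) (\<lambda>i. f (k + i))"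
  using assms unfolding fw_def by auto

lemma fwV: "fw x y L f \<Longrightarrow> x \<in> V \<and> y \<in> V" unfolding fw_def by (metis le0 order_refl)

lemma d_refl: "x \<in> V \<Longrightarrow> d x x = 0" using fw_dist[OF fw_refl] by simp
lemma d_le1: "E x y \<Longrightarrow> d x y \<le> 1" using fw_dist[OF fw_edge] by simp
lemma d_sym: assumes "x \<in> V" "y \<in> V" shows "d x y = d y x"
proof -
  obtain f where f: "fw x y (d x y) f" using dist_fw assms by blast
  obtain g where g: "fw y x (d y x) g" using dist_fw assms by blast
  show ?thesis using fw_dist[OF fw_rev[OF f]] fw_dist[OF fw_rev[OF g]] by simp
qed
lemma d_tri: assumes "x \<in> V" "y \<in> V" "z \<in> V" shows "d x z \<le> d x y + d y z"
proof -
  obtain f where f: "fw x y (d x y) f" using dist_fw assms by blast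
  obtain g where g: "fw y z (d y z) g" using dist_fw assms by blast
  show ?thesis using fw_dist[OF fw_cat[OF f g]] .
qed
lemma d0: assumes "x \<in> V" "y \<in> V" "d x y = 0" shows "x = y"
proof -
  obtain f where f: "fw x y (d x y) f" using dist_fw assms by blast
  thus ?thesis using assms unfolding fw_def by metis
qed
lemma d1: assumes "x \<in> V" "y \<in> V" shows "d x y = 1 \<longleftrightarrow> E x y"
proof
  assume "d x y = 1"
  moreover obtain f where f: "fw x y (d x y) f" using dist_fw assms by blast
  ultimately show "E x y" by (auto simp: fw_def)
next
  assume e: "E x y"
  hence "x \<noteq> y" by (rule Eneq)
  hence "d x y \<noteq> 0" using d0 assms by blast
  thus "d x y = 1" using d_le1[OF e] by simp
qed
lemma d2: assumes "x \<in> V" "y \<in> V" "d x y = 2" shows "\<exists>w. E x w \<and> E w y"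
proof -
  obtain f where f: "fw x y (d x y) f" using dist_fw assms by blast
  hence f2: "fw x y (Suc (Suc 0)) f" using assms by (simp add: numeral_2_eq_2)
  hence "E (f 0) (f (Suc 0))" "E (f (Suc 0)) (f (Suc (Suc 0)))" unfolding fw_def by blast+
  thus ?thesis using f2 unfolding fw_def by metis
qed
lemma d_le2: assumes "E x w" "E w y" shows "d x y \<le> 2"
proof -
  have "fw x y (1+1) (\<lambda>i. if i \<le> 1 then (if i = 0 then x else w) else (if i - 1 = 0 then w else y))"
    by (rule fw_cat[OF fw_edge[OF assms(1)] fw_edge[OF assms(2)]])
  from fw_dist[OF this] show ?thesis by simp
qed

lemma geod: assumes f: "fw x y L f" and L: "L = d x y" and k: "k \<le> L"
  shows "d x (f k) = k"
proof -
  have "d x (f k) \<le> k" using fw_dist[OF fw_take[OF f k]] .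
  moreover have "\<not> d x (f k) < k"
  proof
    assume lt: "d x (f k) < k"
    have "f k \<in> V" "x \<in> V" using f k by (auto simp: fw_def)
    then obtain g where g: "fw x (f k) (d x (f k)) g" using dist_fw by blast
    from fw_dist[OF fw_cat[OF g fw_drop[OF f k]]] have "d x y \<le> d x (f k) + (L - k)" .
    thus False using lt L k by simp
  qed
  ultimately show ?thesis by simp
qed


lemma cyc_V: "is_cycle V E c \<Longrightarrow> i < length c \<Longrightarrow> c ! i \<in> V"
  unfolding is_cycle_def by (meson nth_mem subsetD)
lemma cyc_len: "is_cycle V E c \<Longrightarrow> length c \<le> card V"
  unfolding is_cycle_def by (metis card_mono distinct_card finV)
lemma girth_le: "is_cycle V E c \<Longrightarrow> girth V E \<le> length c"
  unfolding girth_def by (rule Least_le) blast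
lemma girth_ex: "has_cycle V E \<Longrightarrow> \<exists>c. is_cycle V E c \<and> length c = girth V E"
  unfolding girth_def has_cycle_def by (rule LeastI_ex) blast
lemma girth_ge3: "has_cycle V E \<Longrightarrow> girth V E \<ge> 3"
  using girth_ex unfolding is_cycle_def by metis
lemma girth_le_card: "has_cycle V E \<Longrightarrow> girth V E \<le> card V"
  using girth_ex cyc_len by metis

lemma cyc_edge: "is_cycle V E c \<Longrightarrow> i < length c \<Longrightarrow> E (c ! i) (c ! (Suc i mod length c))"
  unfolding is_cycle_def by blast

lemma tri_cycle: assumes "E a b" "E b c" "E c a" shows "is_cycle V E [a,b,c]"
  unfolding is_cycle_def
proof (intro conjI allI impI)
  show "distinct [a, b, c]" using Eneq[OF assms(1)] Eneq[OF assms(2)] Eneq[OF assms(3)] by auto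
  show "set [a, b, c] \<subseteq> V" using assms EV1 by auto
  fix i assume "i < length [a,b,c]"
  hence "i = 0 \<or> i = 1 \<or> i = 2" by auto
  thus "E ([a, b, c] ! i) ([a, b, c] ! (Suc i mod length [a, b, c]))" using assms by auto
qed simp

lemma quad_cycle: assumes "E a b" "E b c" "E c e" "E e a" "a \<noteq> c" "b \<noteq> e"
  shows "is_cycle V E [a,b,c,e]"
  unfolding is_cycle_def
proof (intro conjI allI impI)
  show "distinct [a, b, c, e]" using Eneq[OF assms(1)] Eneq[OF assms(2)] Eneq[OF assms(3)] Eneq[OF assms(4)] assms(5,6) by auto
  show "set [a, b, c, e] \<subseteq> V" using assms EV1 by auto
  fix i assume "i < length [a,b,c,e]"
  hence "i = 0 \<or> i = 1 \<or> i = 2 \<or> i = 3" by auto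
  thus "E ([a, b, c, e] ! i) ([a, b, c, e] ! (Suc i mod length [a, b, c, e]))" using assms by auto
qed simp

lemma nb_cycle:
  assumes e: "\<forall>i<L. E (f i) (f (Suc i))" and ab: "a < b" "b \<le> L" "f a = f b"
    and nb: "\<forall>k. k + 2 \<le> L \<longrightarrow> f k \<noteq> f (k + 2)"
  shows "\<exists>c. is_cycle V E c \<and> length c \<le> L"
proof -
  define P where "P \<delta> \<longleftrightarrow> 0 < \<delta> \<and> (\<exists>a'. a' + \<delta> \<le> L \<and> f a' = f (a' + \<delta>))" for \<delta>
  have "P (b - a)" unfolding P_def using ab by (intro conjI exI[of _ a]) auto
  hence P0: "P (LEAST \<delta>. P \<delta>)" by (rule LeastI)
  define \<delta> where "\<delta> = (LEAST \<delta>. P \<delta>)"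
  have min: "\<not> P \<delta>'" if "\<delta>' < \<delta>" for \<delta>' using not_less_Least that \<delta>_def by blast
  obtain a0 where a0: "a0 + \<delta> \<le> L" "f a0 = f (a0 + \<delta>)" "0 < \<delta>" using P0 \<delta>_def P_def by auto
  have "\<delta> \<noteq> 1"
  proof
    assume "\<delta> = 1"
    hence "E (f a0) (f (Suc a0))" using e a0(1) by auto
    thus False using a0 \<open>\<delta> = 1\<close> Eirr by simp
  qed
  moreover have "\<delta> \<noteq> 2" using nb a0 by auto
  ultimately have d3: "\<delta> \<ge> 3" using a0 by linarith
  define c where "c = map (\<lambda>i. f (a0 + i)) [0..<\<delta>]"
  have len: "length c = \<delta>" by (simp add: c_def)
  have cn: "c ! i = f (a0 + i)" if "i < \<delta>" for i using that by (simp add: c_def)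
  have "is_cycle V E c" unfolding is_cycle_def
  proof (intro conjI allI impI)
    show "3 \<le> length c" using d3 len by simp
    show "distinct c" unfolding distinct_conv_nth len
    proof (intro allI impI)
      fix i j assume ij: "i < \<delta>" "j < \<delta>" "i \<noteq> j"
      show "c ! i \<noteq> c ! j"
      proof
        assume eq: "c ! i = c ! j"
        show False
        proof (cases "i < j")
          case True
          have "P (j - i)" unfolding P_def using True ij a0 eq cn
            by (intro conjI exI[of _ "a0 + i"]) auto
          thus False using min[of "j - i"] ij by auto
        next
          case False
          hence "j < i" using ij by simp
          have "P (i - j)" unfolding P_def using \<open>j < i\<close> ij a0 eq cn
            by (intro conjI exI[of _ "a0 + j"]) auto
          thus False using min[of "i - j"] ij by auto
        qed
      qed
    qed
    show "set c \<subseteq> V"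
    proof
      fix x assume "x \<in> set c"
      then obtain i where "i < \<delta>" "x = f (a0 + i)" by (auto simp: c_def)
      moreover have "E (f (a0 + i)) (f (Suc (a0 + i)))" using e a0 \<open>i < \<delta>\<close> by auto
      ultimately show "x \<in> V" using EV1 by blast
    qed
    show "E (c ! i) (c ! (Suc i mod length c))" if "i < length c" for i
    proof (cases "Suc i < \<delta>")
      case True
      thus ?thesis using e a0 that len cn by auto
    next
      case False
      hence "Suc i = \<delta>" using that len by simp
      hence "Suc i mod length c = 0" using len by simp
      moreover have "E (f (a0 + i)) (f (Suc (a0 + i)))" using e a0 that len by auto
      moreover have "c ! 0 = f (a0 + \<delta>)" using cn[of 0] a0 by simp
      moreover have "c ! i = f (a0 + i)" using cn that len by simp
      moreover have "a0 + \<delta> = Suc (a0 + i)" using \<open>Suc i = \<delta>\<close> by simp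
      ultimately show ?thesis by simp
    qed
  qed
  thus ?thesis using len a0 by auto
qed

lemma cyc_fw: assumes c: "is_cycle V E c" and i: "i < length c"
  shows "fw (c ! i) (c ! ((i + L) mod length c)) L (\<lambda>k. c ! ((i + k) mod length c))"
  unfolding fw_def
proof (intro conjI allI impI)
  show "c ! ((i + 0) mod length c) = c ! i" using i by simp
  show "c ! ((i + k) mod length c) \<in> V" for k
  proof -
    have "0 < length c" using i by arith
    thus ?thesis using cyc_V[OF c] by simp
  qed
  show "E (c ! ((i + k) mod length c)) (c ! ((i + Suc k) mod length c))" for k
  proof -
    have "0 < length c" using i by arith
    have "(i + k) mod length c < length c" using \<open>0 < length c\<close> by simp
    from cyc_edge[OF c this]
    have "E (c ! ((i + k) mod length c)) (c ! (Suc ((i + k) mod length c) mod length c))" .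
    moreover have "Suc ((i + k) mod length c) mod length c = (i + Suc k) mod length c"
      by (simp add: mod_Suc_eq)
    ultimately show ?thesis by simp
  qed
qed simp


lemma fw_cong: "fw x y L f \<Longrightarrow> (\<And>i. i \<le> L \<Longrightarrow> f i = g i) \<Longrightarrow> fw x y L g"
  unfolding fw_def by auto

lemma rot_cycle: assumes c: "is_cycle V E c"
  shows "is_cycle V E (rotate m c)" "length (rotate m c) = length c"
    "\<And>k. k < length c \<Longrightarrow> rotate m c ! k = c ! ((m + k) mod length c)"
proof -
  show "length (rotate m c) = length c" by simp
  show rn: "\<And>k. k < length c \<Longrightarrow> rotate m c ! k = c ! ((m + k) mod length c)"
    by (simp add: nth_rotate)
  have "3 \<le> length c" using c by (simp add: is_cycle_def)
  hence n0: "0 < length c" by linarith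
  show "is_cycle V E (rotate m c)" unfolding is_cycle_def
  proof (intro conjI allI impI)
    show "3 \<le> length (rotate m c)" "distinct (rotate m c)" "set (rotate m c) \<subseteq> V"
      using c by (auto simp: is_cycle_def)
    fix k assume k: "k < length (rotate m c)"
    have k': "k < length c" using k by simp
    have a: "(m + k) mod length c < length c" using n0 by simp
    have "E (c ! ((m + k) mod length c)) (c ! (Suc ((m + k) mod length c) mod length c))"
      by (rule cyc_edge[OF c a])
    moreover have "Suc ((m + k) mod length c) mod length c = (m + Suc k mod length c) mod length c"
      by (simp add: mod_Suc_eq mod_add_right_eq)
    moreover have "Suc k mod length c < length c" using n0 by simp
    ultimately show "E (rotate m c ! k) (rotate m c ! (Suc k mod length (rotate m c)))"
      using rn k' by simp
  qed
qed

lemma cd_upper_aux: assumes c: "is_cycle V E c" and ij: "i \<le> j" "j < length c"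
  shows "d (c ! i) (c ! j) \<le> j - i" "d (c ! i) (c ! j) \<le> length c - (j - i)"
proof -
  have "(i + (j - i)) mod length c = j" using ij by simp
  thus "d (c ! i) (c ! j) \<le> j - i" using fw_dist[OF cyc_fw[OF c, of i "j - i"]] ij by simp
  have "j + (length c - (j - i)) = length c + i" using ij by linarith
  hence "(j + (length c - (j - i))) mod length c = i" using ij by simp
  hence "d (c ! j) (c ! i) \<le> length c - (j - i)" using fw_dist[OF cyc_fw[OF c, of j "length c - (j - i)"]] ij by simp
  moreover have "d (c ! i) (c ! j) = d (c ! j) (c ! i)" using c ij by (intro d_sym cyc_V) auto
  ultimately show "d (c ! i) (c ! j) \<le> length c - (j - i)" by simp
qed

lemma cd_upper: assumes c: "is_cycle V E c" and ij: "i < length c" "j < length c"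
  shows "d (c ! i) (c ! j) \<le> cd (length c) i j"
proof (cases "i \<le> j")
  case True thus ?thesis using cd_upper_aux[OF c True ij(2)] by (simp add: cd_def)
next
  case False
  hence "d (c ! j) (c ! i) \<le> cd (length c) i j" using cd_upper_aux[OF c _ ij(1), of j] by (simp add: cd_def)
  moreover have "d (c ! i) (c ! j) = d (c ! j) (c ! i)" using c ij by (intro d_sym cyc_V) auto
  ultimately show ?thesis by simp
qed

lemma iso_lb: assumes c: "is_cycle V E c" and g: "length c = girth V E" and j: "2 * j \<le> length c"
  shows "j \<le> d (c ! 0) (c ! j)"
proof -
  let ?n = "length c"
  have n3: "?n \<ge> 3" using c by (simp add: is_cycle_def)
  have dc: "distinct c" using c by (simp add: is_cycle_def)
  have main: "\<forall>j. 2 * j \<le> ?n \<longrightarrow> d (c ! 0) (c ! j) = L \<longrightarrow> j \<le> L" for L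
  proof (induction L rule: less_induct)
    case (less L)
    show ?case
    proof (intro allI impI, rule ccontr)
      fix j assume j: "2 * j \<le> ?n" and dL: "d (c ! 0) (c ! j) = L" and nl: "\<not> j \<le> L"
      have jn: "j < ?n" using j n3 by linarith
      have n0: "0 < ?n" using jn by arith
      have c0V: "c ! 0 \<in> V" using cyc_V[OF c n0] .
      have cjV: "c ! j \<in> V" using cyc_V[OF c jn] .
      have "j \<noteq> 0" using nl by auto
      hence "c ! 0 \<noteq> c ! j" using dc jn n0 by (simp add: nth_eq_iff_index_eq)
      hence L0: "L \<noteq> 0" using d0[OF c0V cjV] dL by auto
      obtain P where P: "fw (c ! 0) (c ! j) L P" using dist_fw[OF c0V cjV] dL by auto
      have Q0: "fw (c ! ((0 + j) mod ?n)) (c ! 0) j (\<lambda>i. c ! ((0 + (j - i)) mod ?n))"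
        by (rule fw_rev[OF cyc_fw[OF c n0, of j]])
      have Q: "fw (c ! j) (c ! 0) j (\<lambda>k. c ! (j - k))"
        using fw_cong[OF Q0, of "\<lambda>k. c ! (j - k)"] jn by simp
      define R where "R = (\<lambda>k. if k \<le> L then P k else c ! (j - (k - L)))"
      have R: "fw (c ! 0) (c ! 0) (L + j) R" unfolding R_def by (rule fw_cat[OF P Q])
      have geo: "\<And>k. k \<le> L \<Longrightarrow> d (c ! 0) (P k) = k" using geod[OF P dL[symmetric]] by blast
      have nb: "\<forall>k. k + 2 \<le> L + j \<longrightarrow> R k \<noteq> R (k + 2)"
      proof (intro allI impI)
        fix k assume k: "k + 2 \<le> L + j"
        consider "k + 2 \<le> L" | "k + 1 = L" | "L \<le> k" by linarith
        thus "R k \<noteq> R (k + 2)"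
        proof cases
          case 1
          thus ?thesis using geo[of k] geo[of "k+2"] unfolding R_def by auto
        next
          case 2
          have Rk: "R k = P k" using 2 unfolding R_def by simp
          have Rk2: "R (k + 2) = c ! (j - 1)" using 2 unfolding R_def by simp
          show ?thesis
          proof
            assume "R k = R (k + 2)"
            hence "d (c ! 0) (c ! (j - 1)) = k" using geo[of k] 2 Rk Rk2 by simp
            moreover have "k < L" using 2 by simp
            ultimately have "j - 1 \<le> k" using less.IH[of k] j by auto
            thus False using 2 nl by simp
          qed
        next
          case 3
          have Rk: "R k = c ! (j - (k - L))" using 3 L0 P unfolding R_def fw_def by auto
          have Rk2: "R (k + 2) = c ! (j - (k + 2 - L))" using 3 unfolding R_def by auto
          have "j - (k - L) \<noteq> j - (k + 2 - L)" using 3 k by linarith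
          moreover have "j - (k - L) < ?n" "j - (k + 2 - L) < ?n" using jn by auto
          ultimately show ?thesis using Rk Rk2 dc by (metis nth_eq_iff_index_eq)
        qed
      qed
      have e: "\<forall>i<L + j. E (R i) (R (Suc i))" using R by (simp add: fw_def)
      have "R 0 = R (L + j)" using R by (simp add: fw_def)
      then obtain cy where cy: "is_cycle V E cy" "length cy \<le> L + j"
        using nb_cycle[OF e, of 0 "L + j"] nb L0 by auto
      have "girth V E \<le> L + j" using girth_le[OF cy(1)] cy(2) by simp
      thus False using g j nl by linarith
    qed
  qed
  thus ?thesis using j by blast
qed

lemma iso: assumes c: "is_cycle V E c" and g: "length c = girth V E"
  and ij: "i < length c" "j < length c"
  shows "d (c ! i) (c ! j) = cd (length c) i j"
proof -
  let ?n = "length c"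
  have cne: "c \<noteq> []" using ij(1) by (cases c) auto
  have lb: "cd ?n i j \<le> d (c ! i) (c ! j)" if ij: "i \<le> j" "j < ?n" for i j
  proof (cases "2 * (j - i) \<le> ?n")
    case True
    let ?c = "rotate i c"
    have c': "is_cycle V E ?c" "length ?c = girth V E" using rot_cycle[OF c] g by auto
    have "j - i \<le> d (?c ! 0) (?c ! (j - i))" using iso_lb[OF c'] True by simp
    moreover have "?c ! 0 = c ! i" using rot_cycle(3)[OF c, of 0 i] ij cne by simp
    moreover have "?c ! (j - i) = c ! j" using rot_cycle(3)[OF c, of "j - i" i] ij by simp
    ultimately show ?thesis unfolding cd_def using ij by auto
  next
    case False
    let ?c = "rotate j c"
    have c': "is_cycle V E ?c" "length ?c = girth V E" using rot_cycle[OF c] g by auto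
    have "?n - (j - i) \<le> d (?c ! 0) (?c ! (?n - (j - i)))" using iso_lb[OF c'] False by simp
    moreover have "?c ! 0 = c ! j" using rot_cycle(3)[OF c, of 0 j] ij cne by simp
    moreover have "(j + (?n - (j - i))) mod ?n = i"
    proof -
      have "j + (?n - (j - i)) = ?n + i" using ij by linarith
      thus ?thesis using ij by simp
    qed
    moreover have "?c ! (?n - (j - i)) = c ! ((j + (?n - (j - i))) mod ?n)"
      using rot_cycle(3)[OF c] ij False by simp
    moreover have "d (c ! i) (c ! j) = d (c ! j) (c ! i)" using c ij by (intro d_sym cyc_V) auto
    ultimately show ?thesis unfolding cd_def using ij by auto
  qed
  have "cd ?n i j \<le> d (c ! i) (c ! j)"
  proof (cases "i \<le> j")
    case True thus ?thesis using lb ij by blast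
  next
    case False
    hence "cd ?n j i \<le> d (c ! j) (c ! i)" using lb ij by auto
    moreover have "d (c ! i) (c ! j) = d (c ! j) (c ! i)" using c ij by (intro d_sym cyc_V) auto
    ultimately show ?thesis by (simp add: cd_sym)
  qed
  thus ?thesis using cd_upper[OF c ij] by simp
qed


lemma res_V: "resolving_set V E V"
  unfolding resolving_set_def
proof (intro conjI ballI impI)
  fix u v assume uv: "u \<in> V" "v \<in> V" "u \<noteq> v"
  have "d u u = 0" using d_refl uv by simp
  moreover have "d v u \<noteq> 0" using d0 uv by metis
  ultimately show "\<exists>w\<in>V. d u w \<noteq> d v w" using uv by metis
qed simp

lemma md_ex: "\<exists>W. resolving_set V E W \<and> card W = metric_dim V E"
  unfolding metric_dim_def by (rule LeastI_ex) (use res_V in blast)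

lemma md_le: "resolving_set V E W \<Longrightarrow> metric_dim V E \<le> card W"
  unfolding metric_dim_def by (rule Least_le) blast

lemma md_ge: "(\<And>W. resolving_set V E W \<Longrightarrow> m \<le> card W) \<Longrightarrow> m \<le> metric_dim V E"
  using md_ex by metis

lemma RB: assumes S: "S \<subseteq> V" and r: "\<forall>u\<in>S. \<forall>v\<in>S. u \<noteq> v \<longrightarrow> (\<exists>w\<in>V - S. d u w \<noteq> d v w)"
  shows "metric_dim V E \<le> card V - card S"
proof -
  have "resolving_set V E (V - S)" unfolding resolving_set_def
  proof (intro conjI ballI impI)
    fix u v assume uv: "u \<in> V" "v \<in> V" "u \<noteq> v"
    show "\<exists>w\<in>V - S. d u w \<noteq> d v w"
    proof (cases "u \<in> S \<and> v \<in> S")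
      case True thus ?thesis using r uv by blast
    next
      case False
      have d0u: "d u u = 0" "d v v = 0" using d_refl uv by auto
      have "d v u \<noteq> 0" "d u v \<noteq> 0" using d0 uv by metis+
      thus ?thesis using False d0u uv by (metis DiffI)
    qed
  qed auto
  hence "metric_dim V E \<le> card (V - S)" by (rule md_le)
  thus ?thesis using S finV by (simp add: card_Diff_subset finite_subset)
qed

lemma twin_le: assumes uv: "u \<in> V" "v \<in> V" "u \<noteq> v"
  and tw: "\<forall>z. z \<noteq> u \<and> z \<noteq> v \<longrightarrow> (E u z \<longleftrightarrow> E v z)"
  and w: "w \<in> V" "w \<noteq> u" "w \<noteq> v"
  shows "d v w \<le> d u w"
proof -
  obtain f where f: "fw u w (d u w) f" using dist_fw uv w by blast
  have L0: "d u w \<noteq> 0" using d0 uv w by metis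
  hence e: "E u (f 1)" using f unfolding fw_def by (metis gr0I One_nat_def)
  have fd: "fw (f 1) w (d u w - 1) (\<lambda>i. f (1 + i))" using fw_drop[OF f, of 1] L0 by simp
  show ?thesis
  proof (cases "f 1 = v")
    case True
    thus ?thesis using fw_dist[OF fd] by simp
  next
    case False
    have "f 1 \<noteq> u" using Eneq[OF e] by simp
    hence "E v (f 1)" using tw e False by blast
    from fw_dist[OF fw_cat[OF fw_edge[OF this] fd]] show ?thesis using L0 by simp
  qed
qed

lemma twin_d: assumes uv: "u \<in> V" "v \<in> V" "u \<noteq> v"
  and tw: "\<forall>z. z \<noteq> u \<and> z \<noteq> v \<longrightarrow> (E u z \<longleftrightarrow> E v z)"
  and w: "w \<in> V" "w \<noteq> u" "w \<noteq> v"
  shows "d u w = d v w"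
proof -
  have "d v w \<le> d u w" by (rule twin_le[OF uv tw w])
  moreover have "d u w \<le> d v w" by (rule twin_le) (use uv tw w in auto)
  ultimately show ?thesis by simp
qed

lemma twin_nres: assumes uv: "u \<in> V" "v \<in> V" "u \<noteq> v" "u \<notin> W" "v \<notin> W"
  and tw: "\<forall>z. z \<noteq> u \<and> z \<noteq> v \<longrightarrow> (E u z \<longleftrightarrow> E v z)"
  shows "\<not> resolving_set V E W"
proof
  assume "resolving_set V E W"
  then obtain w where "w \<in> W" "d u w \<noteq> d v w" "W \<subseteq> V" using uv unfolding resolving_set_def by blast
  thus False using twin_d[OF uv(1-3) tw] uv by blast
qed


lemma card_nth_img: "distinct c \<Longrightarrow> A \<subseteq> {..<length c} \<Longrightarrow> card ((!) c ` A) = card A"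
  by (rule card_image, rule inj_on_nth) auto

lemma nth_img_mem: "distinct c \<Longrightarrow> A \<subseteq> {..<length c} \<Longrightarrow> i < length c \<Longrightarrow> c ! i \<in> (!) c ` A \<longleftrightarrow> i \<in> A"
  by (auto simp: nth_eq_iff_index_eq subset_iff)

lemma girth_cycle: assumes "has_cycle V E"
  obtains c where "is_cycle V E c" "length c = girth V E" "distinct c" "3 \<le> length c"
  using girth_ex[OF assms] unfolding is_cycle_def by blast

lemma dcyc: assumes c: "is_cycle V E c" "length c = girth V E" and ij: "i < length c" "j < length c"
  shows "d (c ! i) (c ! j) = cd (length c) j i"
  using iso[OF c ij] cd_sym by simp

lemma upper: assumes hc: "has_cycle V E" shows "metric_dim V E \<le> card V - girth V E + 2"
proof -
  obtain c where c: "is_cycle V E c" "length c = girth V E" "distinct c" "3 \<le> length c"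
    using girth_cycle[OF hc] by blast
  let ?g = "length c"
  let ?S = "(!) c ` {2..<?g}"
  have "{2..<?g} \<subseteq> {..<?g}" by auto
  hence cS: "card ?S = ?g - 2" using card_nth_img[OF c(3), of "{2..<?g}"] by simp
  have SV: "?S \<subseteq> V" using cyc_V[OF c(1)] by auto
  have "metric_dim V E \<le> card V - card ?S"
  proof (rule RB[OF SV], intro ballI impI)
    fix u v assume u: "u \<in> ?S" and v: "v \<in> ?S" and uv: "u \<noteq> v"
    obtain i where i: "2 \<le> i" "i < ?g" "u = c ! i" using u by auto
    obtain j where j: "2 \<le> j" "j < ?g" "v = c ! j" using v by auto
    have "i \<noteq> j" using i j uv by auto
    hence cdr: "cd ?g 0 i \<noteq> cd ?g 0 j \<or> cd ?g 1 i \<noteq> cd ?g 1 j" using cd_res c i j by auto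
    have g01: "0 < ?g" "1 < ?g" using c(4) by auto
    have "c ! 0 \<notin> ?S" "c ! 1 \<notin> ?S"
      using nth_img_mem[OF c(3) \<open>{2..<?g} \<subseteq> {..<?g}\<close> g01(1)]
        nth_img_mem[OF c(3) \<open>{2..<?g} \<subseteq> {..<?g}\<close> g01(2)] by auto
    hence c0: "c ! 0 \<in> V - ?S" "c ! 1 \<in> V - ?S" using cyc_V[OF c(1)] g01 by auto
    have "d u (c ! 0) = cd ?g 0 i" "d v (c ! 0) = cd ?g 0 j" "d u (c ! 1) = cd ?g 1 i" "d v (c ! 1) = cd ?g 1 j"
      using dcyc[OF c(1,2)] i j g01 by auto
    thus "\<exists>w\<in>V - ?S. d u w \<noteq> d v w" using cdr c0 by metis
  qed
  moreover have "?g \<le> card V" using cyc_len[OF c(1)] .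
  ultimately show ?thesis using cS c by linarith
qed


lemma pendant: assumes e: "E x y" and p: "\<forall>z. E x z \<longrightarrow> z = y" and v: "v \<in> V" "v \<noteq> x"
  shows "d v x = d v y + 1"
proof -
  have xV: "x \<in> V" and yV: "y \<in> V" using e EV1 EV2 by auto
  obtain f where f: "fw v y (d v y) f" using dist_fw v yV by blast
  have le: "d v x \<le> d v y + 1" using fw_dist[OF fw_cat[OF f fw_edge[OF Esym[OF e]]]] by simp
  obtain g where g: "fw x v (d x v) g" using dist_fw v xV by blast
  have L0: "d x v \<noteq> 0" using d0 v xV by metis
  hence "E x (g 1)" using g unfolding fw_def by (metis gr0I One_nat_def)
  hence "g 1 = y" using p by blast
  hence "fw y v (d x v - 1) (\<lambda>i. g (1 + i))" using fw_drop[OF g, of 1] L0 by simp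
  hence "d y v \<le> d x v - 1" by (rule fw_dist)
  moreover have "d y v = d v y" "d x v = d v x" using d_sym v xV yV by auto
  ultimately show ?thesis using le L0 by linarith
qed

lemma leave_cycle: assumes c: "set c \<subseteq> V" "c \<noteq> []" and y: "y \<in> V" "y \<notin> set c"
  shows "\<exists>x i. i < length c \<and> E (c ! i) x \<and> x \<notin> set c"
proof -
  have c0: "c ! 0 \<in> set c" using c by simp
  hence "c ! 0 \<in> V" using c by auto
  then obtain f where f: "fw (c ! 0) y (d (c ! 0) y) f" using dist_fw y by blast
  let ?L = "d (c ! 0) y"
  have ex: "f ?L \<notin> set c" using f y by (simp add: fw_def)
  define K where "K = (LEAST k. f k \<notin> set c)"
  have K1: "f K \<notin> set c" unfolding K_def using ex by (rule LeastI)
  have K2: "K \<le> ?L" unfolding K_def using ex by (rule Least_le)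
  have K0: "K \<noteq> 0"
  proof
    assume "K = 0"
    thus False using K1 f c0 by (simp add: fw_def)
  qed
  have K3: "f (K - 1) \<in> set c" using not_less_Least[of "K - 1" "\<lambda>k. f k \<notin> set c"] K0 K_def by auto
  have "K - 1 < ?L" using K2 K0 by linarith
  hence "E (f (K - 1)) (f (Suc (K - 1)))" using f unfolding fw_def by blast
  hence "E (f (K - 1)) (f K)" using K0 by simp
  moreover obtain i where "i < length c" "f (K - 1) = c ! i" using K3 by (auto simp: in_set_conv_nth)
  ultimately show ?thesis using K1 by metis
qed

lemma cyc_iso: assumes c: "is_cycle V E c" "length c = girth V E" and s: "set c = V"
  shows "graph_iso V E (fst (cycle_graph (card V))) (snd (cycle_graph (card V)))"
proof -
  let ?g = "length c"
  have dc: "distinct c" using c by (simp add: is_cycle_def)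
  have cV: "card V = ?g" using s dc distinct_card by metis
  have b: "bij_betw ((!) c) {..<?g} V" using bij_betw_nth[OF dc] s by simp
  let ?f = "inv_into {..<?g} ((!) c)"
  have bf: "bij_betw ?f V {..<?g}" using bij_betw_inv_into[OF b] .
  have fi: "\<And>i. i < ?g \<Longrightarrow> ?f (c ! i) = i" using b by (simp add: bij_betw_def inv_into_f_f)
  have "\<forall>x\<in>V. \<forall>y\<in>V. E x y \<longleftrightarrow> snd (cycle_graph (card V)) (?f x) (?f y)"
  proof (intro ballI)
    fix x y assume x: "x \<in> V" and y: "y \<in> V"
    obtain i where i: "i < ?g" "x = c ! i" using x s by (auto simp: in_set_conv_nth)
    obtain j where j: "j < ?g" "y = c ! j" using y s by (auto simp: in_set_conv_nth)
    have "E (c ! i) (c ! j) \<longleftrightarrow> (i \<noteq> j \<and> (j = Suc i mod ?g \<or> i = Suc j mod ?g))"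
    proof
      assume e: "E (c ! i) (c ! j)"
      hence "c ! i \<noteq> c ! j" by (rule Eneq)
      hence "i \<noteq> j" by auto
      moreover have "d (c ! i) (c ! j) = 1" using d1 e EV1 EV2 by blast
      hence "cd ?g i j = 1" using iso[OF c i(1) j(1)] by simp
      hence "j = Suc i mod ?g \<or> i = Suc j mod ?g" using cd_adj i j by blast
      ultimately show "i \<noteq> j \<and> (j = Suc i mod ?g \<or> i = Suc j mod ?g)" by blast
    next
      assume "i \<noteq> j \<and> (j = Suc i mod ?g \<or> i = Suc j mod ?g)"
      thus "E (c ! i) (c ! j)" using cyc_edge[OF c(1)] i j Esym by metis
    qed
    thus "E x y \<longleftrightarrow> snd (cycle_graph (card V)) (?f x) (?f y)"
      using i j fi cV by (simp add: cycle_graph_def)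
  qed
  moreover have "fst (cycle_graph (card V)) = {..<?g}" using cV by (auto simp: cycle_graph_def)
  ultimately show ?thesis unfolding graph_iso_def using bf by metis
qed


lemma case5_x: assumes c: "is_cycle V E c" "length c = girth V E" and g5: "5 \<le> length c"
  and x: "E (c ! 0) x" "x \<notin> set c"
  shows "metric_dim V E \<le> card V - girth V E + 1"
proof -
  let ?g = "length c"
  have dc: "distinct c" using c by (simp add: is_cycle_def)
  have xV: "x \<in> V" using x EV2 by auto
  have g0: "0 < ?g" "1 < ?g" "2 < ?g" using g5 by auto
  have cV: "\<And>i. i < ?g \<Longrightarrow> c ! i \<in> V" using cyc_V[OF c(1)] .
  have cE: "\<And>i. Suc i < ?g \<Longrightarrow> E (c ! i) (c ! Suc i)"
  proof -
    fix i assume "Suc i < ?g"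
    thus "E (c ! i) (c ! Suc i)" using cyc_edge[OF c(1), of i] by simp
  qed
  have cw: "E (c ! (?g - 1)) (c ! 0)" using cyc_edge[OF c(1), of "?g - 1"] g0 by simp
  have xc: "\<And>i. i < ?g \<Longrightarrow> x \<noteq> c ! i" using x(2) by auto
  have cne: "\<And>i j. i < ?g \<Longrightarrow> j < ?g \<Longrightarrow> i \<noteq> j \<Longrightarrow> c ! i \<noteq> c ! j"
    using dc by (simp add: nth_eq_iff_index_eq)
  have nocyc: "\<And>cy. is_cycle V E cy \<Longrightarrow> length cy \<ge> 5" using girth_le c g5 by fastforce
  have noother: "\<not> E x (c ! j)" if j: "0 < j" "j < ?g" for j
  proof
    assume e: "E x (c ! j)"
    have "d (c ! 0) (c ! j) \<le> 2" using d_le2[OF x(1) e] .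
    hence "cd ?g j 0 \<le> 2" using dcyc[OF c(1,2) g0(1) j(2)] by simp
    hence "cd ?g 0 j \<le> 2" by (simp add: cd_sym)
    hence "j \<le> 2 \<or> j + 2 \<ge> ?g" using cd_two j by blast
    hence "j = 1 \<or> j = 2 \<or> j = ?g - 1 \<or> j = ?g - 2" using j by auto
    thus False
    proof (elim disjE)
      assume "j = 1"
      hence "is_cycle V E [x, c ! 0, c ! 1]" using e x cE[of 0] g0 Esym by (intro tri_cycle) auto
      thus False using nocyc by fastforce
    next
      assume "j = 2"
      hence "is_cycle V E [x, c ! 0, c ! 1, c ! 2]" using e x cE[of 0] cE[of 1] g0 Esym xc cne[of 0 2]
        by (intro quad_cycle) (auto simp: numeral_2_eq_2)
      thus False using nocyc by fastforce
    next
      assume "j = ?g - 1"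
      hence "is_cycle V E [x, c ! (?g - 1), c ! 0]" using e x cw Esym by (intro tri_cycle) auto
      thus False using nocyc by fastforce
    next
      assume j2: "j = ?g - 2"
      have "E (c ! (?g - 2)) (c ! Suc (?g - 2))" using cE[of "?g - 2"] g0 by simp
      moreover have "Suc (?g - 2) = ?g - 1" using g0 by simp
      ultimately have "E (c ! (?g - 2)) (c ! (?g - 1))" by simp
      moreover have e1: "E x (c ! (?g - 2))" using e j2 by simp
      moreover have "x \<noteq> c ! (?g - 1)" using xc g0 by simp
      moreover have "c ! (?g - 2) \<noteq> c ! 0" using cne[of "?g - 2" 0] g0 g5 by simp
      ultimately have "is_cycle V E [x, c ! (?g - 2), c ! (?g - 1), c ! 0]"
        using quad_cycle[of x "c ! (?g - 2)" "c ! (?g - 1)" "c ! 0"] cw x(1) by blast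
      thus False using nocyc by fastforce
    qed
  qed
  have gc: "?g \<le> card V" using cyc_len[OF c(1)] .
  show ?thesis
  proof (cases "\<forall>z. E x z \<longrightarrow> z = c ! 0")
    case True
    let ?S = "(!) c ` ({..<?g} - {1})"
    have cS: "card ?S = ?g - 1" using card_nth_img[OF dc, of "{..<?g} - {1}"] g0 by auto
    have SV: "?S \<subseteq> V" using cV by auto
    have "metric_dim V E \<le> card V - card ?S"
    proof (rule RB[OF SV], intro ballI impI)
      fix u v assume u: "u \<in> ?S" and v: "v \<in> ?S" and uv: "u \<noteq> v"
      obtain i where i: "i < ?g" "i \<noteq> 1" "u = c ! i" using u by auto
      obtain j where j: "j < ?g" "j \<noteq> 1" "v = c ! j" using v by auto
      have "i \<noteq> j" using i j uv by auto
      hence cdr: "cd ?g 0 i \<noteq> cd ?g 0 j \<or> cd ?g 1 i \<noteq> cd ?g 1 j" using cd_res g5 i j by auto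
      have "c ! 1 \<notin> ?S" using nth_img_mem[OF dc _ g0(2), of "{..<?g} - {1}"] by auto
      hence w1: "c ! 1 \<in> V - ?S" using cV g0 by auto
      have w2: "x \<in> V - ?S" using xV x(2) by auto
      have "d u (c ! 1) = cd ?g 1 i" "d v (c ! 1) = cd ?g 1 j" using dcyc[OF c(1,2)] i j g0 by auto
      moreover have "d u x = cd ?g 0 i + 1"
      proof -
        have "d (c ! i) x = d (c ! i) (c ! 0) + 1"
          by (rule pendant[OF Esym[OF x(1)] True]) (use cV xc i in auto)
        thus ?thesis using dcyc[OF c(1,2) i(1) g0(1)] i by simp
      qed
      moreover have "d v x = cd ?g 0 j + 1"
      proof -
        have "d (c ! j) x = d (c ! j) (c ! 0) + 1"
          by (rule pendant[OF Esym[OF x(1)] True]) (use cV xc j in auto)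
        thus ?thesis using dcyc[OF c(1,2) j(1) g0(1)] j by simp
      qed
      ultimately show "\<exists>w\<in>V - ?S. d u w \<noteq> d v w" using cdr w1 w2 by (metis add_right_cancel)
    qed
    thus ?thesis using cS gc c(2) g0 by linarith
  next
    case False
    then obtain z where z: "E x z" "z \<noteq> c ! 0" by blast
    have zc: "z \<notin> set c"
    proof
      assume "z \<in> set c"
      then obtain j where j: "j < ?g" "z = c ! j" by (auto simp: in_set_conv_nth)
      have "j \<noteq> 0"
      proof
        assume "j = 0"
        thus False using z(2) j by simp
      qed
      thus False using noother[of j] z j by auto
    qed
    have zV: "z \<in> V" using z EV2 by auto
    let ?C = "(!) c ` {2..<?g}"
    let ?S = "insert x ?C"
    have sub: "{2..<?g} \<subseteq> {..<?g}" by auto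
    have cC: "card ?C = ?g - 2" using card_nth_img[OF dc sub] by simp
    have "x \<notin> ?C" using x(2) by auto
    hence cS: "card ?S = ?g - 1" using cC g0 by simp
    have SV: "?S \<subseteq> V" using cV xV by auto
    have notS: "\<And>i. i < ?g \<Longrightarrow> c ! i \<in> ?S \<longleftrightarrow> 2 \<le> i"
      using nth_img_mem[OF dc sub] xc by auto
    have w0: "c ! 0 \<in> V - ?S" "c ! 1 \<in> V - ?S" using notS[of 0] notS[of 1] g0 cV by auto
    have wz: "z \<in> V - ?S" using zV zc Eneq[OF z(1)] by auto
    have dx0: "d x (c ! 0) = 1" using d1 xV cV g0 Esym x(1) by blast
    have dxz: "d x z = 1" using d1 xV zV z by blast
    have xvsc: "\<exists>w\<in>V - ?S. d x w \<noteq> d (c ! i) w" if i: "2 \<le> i" "i < ?g" for i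
    proof (cases "i = ?g - 1")
      case True
      have "\<not> E (c ! i) z"
      proof
        assume e: "E (c ! i) z"
        have "is_cycle V E [x, c ! 0, c ! i, z]"
          using x(1) e z Esym cw True xc[of i] i zc by (intro quad_cycle) auto
        thus False using nocyc by fastforce
      qed
      hence "d (c ! i) z \<noteq> 1" using d1 cV i zV by blast
      thus ?thesis using dxz wz by metis
    next
      case False
      have "cd ?g 0 i \<noteq> 1" using cd_one[of ?g i] g5 i False by auto
      hence "d (c ! i) (c ! 0) \<noteq> 1" using dcyc[OF c(1,2) i(2) g0(1)] by simp
      thus ?thesis using dx0 w0 by metis
    qed
    have "metric_dim V E \<le> card V - card ?S"
    proof (rule RB[OF SV], intro ballI impI)
      fix u v assume u: "u \<in> ?S" and v: "v \<in> ?S" and uv: "u \<noteq> v"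
      show "\<exists>w\<in>V - ?S. d u w \<noteq> d v w"
      proof (cases "u = x")
        case True
        then obtain i where "2 \<le> i" "i < ?g" "v = c ! i" using v uv by auto
        thus ?thesis using xvsc True by blast
      next
        case ux: False
        then obtain i where i: "2 \<le> i" "i < ?g" "u = c ! i" using u by auto
        show ?thesis
        proof (cases "v = x")
          case True
          thus ?thesis using xvsc[OF i(1,2)] i by metis
        next
          case False
          then obtain j where j: "2 \<le> j" "j < ?g" "v = c ! j" using v by auto
          have "i \<noteq> j" using i j uv by auto
          hence cdr: "cd ?g 0 i \<noteq> cd ?g 0 j \<or> cd ?g 1 i \<noteq> cd ?g 1 j" using cd_res g5 i j by auto
          have "d u (c ! 0) = cd ?g 0 i" "d v (c ! 0) = cd ?g 0 j" "d u (c ! 1) = cd ?g 1 i" "d v (c ! 1) = cd ?g 1 j"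
            using dcyc[OF c(1,2)] i j g0 by auto
          thus ?thesis using cdr w0 by metis
        qed
      qed
    qed
    thus ?thesis using cS gc c(2) g0 by linarith
  qed
qed


lemma case5: assumes hc: "has_cycle V E" and g5: "5 \<le> girth V E"
  shows "metric_dim V E \<le> card V - girth V E + 1 \<or>
    graph_iso V E (fst (cycle_graph (card V))) (snd (cycle_graph (card V)))"
proof -
  obtain c where c: "is_cycle V E c" "length c = girth V E" "distinct c" "3 \<le> length c"
    using girth_cycle[OF hc] by blast
  have sc: "set c \<subseteq> V" using c by (simp add: is_cycle_def)
  show ?thesis
  proof (cases "set c = V")
    case True thus ?thesis using cyc_iso[OF c(1,2)] by blast
  next
    case False
    then obtain y where y: "y \<in> V" "y \<notin> set c" using sc by blast
    have "c \<noteq> []" using c(4) by auto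
    then obtain x i where xi: "i < length c" "E (c ! i) x" "x \<notin> set c" using leave_cycle[OF sc _ y] by blast
    let ?c = "rotate i c"
    have c': "is_cycle V E ?c" "length ?c = girth V E" using rot_cycle[OF c(1)] c(2) by auto
    have "?c ! 0 = c ! i" using rot_cycle(3)[OF c(1), of 0 i] xi(1) \<open>c \<noteq> []\<close> by simp
    hence "E (?c ! 0) x" "x \<notin> set ?c" using xi by auto
    from case5_x[OF c' _ this] show ?thesis using g5 c'(2) by simp
  qed
qed

lemma case3: assumes hc: "has_cycle V E" and g3: "girth V E = 3"
  shows "metric_dim V E \<le> card V - 2 \<or>
    (card V \<ge> 3 \<and> graph_iso V E (fst (complete_graph (card V))) (snd (complete_graph (card V))))"
proof (cases "\<forall>x\<in>V. \<forall>y\<in>V. x \<noteq> y \<longrightarrow> E x y")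
  case True
  obtain h where h: "bij_betw h V {0..<card V}" using ex_bij_betw_finite_nat[OF finV] by blast
  have "\<forall>x\<in>V. \<forall>y\<in>V. E x y \<longleftrightarrow> snd (complete_graph (card V)) (h x) (h y)"
  proof (intro ballI)
    fix x y assume x: "x \<in> V" and y: "y \<in> V"
    have "h x < card V" "h y < card V" using h x y by (auto simp: bij_betw_def)
    moreover have "h x = h y \<longleftrightarrow> x = y" using h x y by (auto simp: bij_betw_def inj_on_def)
    ultimately show "E x y \<longleftrightarrow> snd (complete_graph (card V)) (h x) (h y)"
      using True x y Eirr by (auto simp: complete_graph_def)
  qed
  hence "graph_iso V E (fst (complete_graph (card V))) (snd (complete_graph (card V)))"
    unfolding graph_iso_def using h by (auto simp: complete_graph_def)
  moreover have "card V \<ge> 3" using girth_le_card[OF hc] g3 by simp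
  ultimately show ?thesis by blast
next
  case False
  then obtain u w where uw: "u \<in> V" "w \<in> V" "u \<noteq> w" "\<not> E u w" by blast
  obtain f where f: "fw u w (d u w) f" using dist_fw uw by blast
  have "d u w \<noteq> 0" using d0 uw by metis
  moreover have "d u w \<noteq> 1" using d1 uw by metis
  ultimately have L2: "2 \<le> d u w" by linarith
  have g1: "d u (f 1) = 1" and g2: "d u (f 2) = 2" using geod[OF f refl] L2 by auto
  have fV: "f 1 \<in> V" "f 2 \<in> V" using f L2 by (auto simp: fw_def)
  have ne: "f 1 \<noteq> f 2" using g1 g2 by auto
  have uS: "u \<noteq> f 1" "u \<noteq> f 2" using g1 g2 d_refl uw by auto
  let ?S = "{f 1, f 2}"
  have "metric_dim V E \<le> card V - card ?S"
  proof (rule RB, use fV in blast, intro ballI impI)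
    fix a b assume ab: "a \<in> ?S" "b \<in> ?S" "a \<noteq> b"
    have "d (f 1) u = 1" "d (f 2) u = 2" using g1 g2 d_sym fV uw by auto
    hence "d a u \<noteq> d b u" using ab by auto
    moreover have "u \<in> V - ?S" using uS uw by auto
    ultimately show "\<exists>x\<in>V - ?S. d a x \<noteq> d b x" by blast
  qed
  thus ?thesis using ne by (simp add: numeral_2_eq_2)
qed


end

context sg begin

lemma RB3: assumes V: "a \<in> V" "b \<in> V" "e \<in> V" and ne: "a \<noteq> b" "a \<noteq> e" "b \<noteq> e"
  and r1: "\<exists>w\<in>V - {a,b,e}. d a w \<noteq> d b w"
  and r2: "\<exists>w\<in>V - {a,b,e}. d a w \<noteq> d e w"
  and r3: "\<exists>w\<in>V - {a,b,e}. d b w \<noteq> d e w"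
  shows "metric_dim V E \<le> card V - 3"
proof -
  have "metric_dim V E \<le> card V - card {a,b,e}"
  proof (rule RB, use V in blast, intro ballI impI)
    fix u v assume "u \<in> {a,b,e}" "v \<in> {a,b,e}" "u \<noteq> v"
    thus "\<exists>w\<in>V - {a,b,e}. d u w \<noteq> d v w" using r1 r2 r3 by (auto, metis+)
  qed
  thus ?thesis using ne by simp
qed

lemma case4: assumes hc: "has_cycle V E" and g4: "girth V E = 4"
  shows "metric_dim V E \<le> card V - 3 \<or>
    (\<exists>r s. r \<ge> 2 \<and> s \<ge> 2 \<and> graph_iso V E (fst (complete_bipartite r s)) (snd (complete_bipartite r s)))"
proof -
  have notri: "False" if "E a b" "E b e" "E e a" for a b e
    using girth_le[OF tri_cycle[OF that]] g4 by simp
  obtain c where c: "is_cycle V E c" "length c = girth V E" "distinct c" "3 \<le> length c"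
    using girth_cycle[OF hc] by blast
  have l4: "length c = 4" using c g4 by simp
  have cV: "\<And>i. i < 4 \<Longrightarrow> c ! i \<in> V" using cyc_V[OF c(1)] l4 by auto
  have e01: "E (c ! 0) (c ! 1)" using cyc_edge[OF c(1), of 0] l4 by simp
  have e12: "E (c ! 1) (c ! 2)" using cyc_edge[OF c(1), of 1] l4 by (simp add: numeral_2_eq_2)
  have e30: "E (c ! 3) (c ! 0)" using cyc_edge[OF c(1), of 3] l4 by simp
  have cne: "\<And>i j. i < 4 \<Longrightarrow> j < 4 \<Longrightarrow> i \<noteq> j \<Longrightarrow> c ! i \<noteq> c ! j"
    using c(3) l4 by (simp add: nth_eq_iff_index_eq)
  define x0 where "x0 = c ! 0"
  have x0V: "x0 \<in> V" using cV x0_def by simp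
  show ?thesis
  proof (cases "\<exists>v\<in>V. 3 \<le> d x0 v")
    case True
    then obtain v where v: "v \<in> V" "3 \<le> d x0 v" by blast
    obtain f where f: "fw x0 v (d x0 v) f" using dist_fw x0V v by blast
    have gk: "\<And>k. k \<le> 3 \<Longrightarrow> d x0 (f k) = k" using geod[OF f refl] v by auto
    have fV: "\<And>k. k \<le> 3 \<Longrightarrow> f k \<in> V" using f v unfolding fw_def by auto
    have dk: "\<And>k. k \<le> 3 \<Longrightarrow> d (f k) x0 = k" using gk fV d_sym x0V by metis
    have fne: "\<And>k l. k \<le> 3 \<Longrightarrow> l \<le> 3 \<Longrightarrow> k \<noteq> l \<Longrightarrow> f k \<noteq> f l" using gk by metis
    have x0n: "\<And>k. 1 \<le> k \<Longrightarrow> k \<le> 3 \<Longrightarrow> x0 \<noteq> f k" using gk d_refl[OF x0V] by fastforce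
    have w: "x0 \<in> V - {f 1, f 2, f 3}" using x0V x0n[of 1] x0n[of 2] x0n[of 3] by auto
    have d123: "d (f 1) x0 = 1" "d (f 2) x0 = 2" "d (f 3) x0 = 3" using dk by auto
    have n: "f 1 \<noteq> f 2" "f 1 \<noteq> f 3" "f 2 \<noteq> f 3" using fne by auto
    have fV': "f 1 \<in> V" "f 2 \<in> V" "f 3 \<in> V" using fV by auto
    have "\<exists>w\<in>V - {f 1, f 2, f 3}. d (f 1) w \<noteq> d (f 2) w" using w d123 by (intro bexI[of _ x0]) simp_all
    moreover have "\<exists>w\<in>V - {f 1, f 2, f 3}. d (f 1) w \<noteq> d (f 3) w" using w d123 by (intro bexI[of _ x0]) simp_all
    moreover have "\<exists>w\<in>V - {f 1, f 2, f 3}. d (f 2) w \<noteq> d (f 3) w" using w d123 by (intro bexI[of _ x0]) simp_all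
    ultimately have "metric_dim V E \<le> card V - 3" by (rule RB3[OF fV' n])
    thus ?thesis by blast
  next
    case False
    hence far: "\<And>v. v \<in> V \<Longrightarrow> d x0 v \<le> 2" by fastforce
    define B where "B = {v \<in> V. E x0 v}"
    have inA: "\<exists>b. E x0 b \<and> E b v" if "v \<in> V" "v \<notin> B" "v \<noteq> x0" for v
    proof -
      have "d x0 v \<noteq> 0" using d0 that x0V by metis
      moreover have "d x0 v \<noteq> 1" using d1 that x0V B_def by auto
      ultimately have "d x0 v = 2" using far[OF that(1)] by linarith
      thus ?thesis using d2 x0V that(1) by blast
    qed
    have B1: "E x0 b \<Longrightarrow> b \<in> B" for b using B_def EV2 by auto
    show ?thesis
    proof (cases "\<exists>a\<in>V. \<exists>a'\<in>V. a \<notin> B \<and> a' \<notin> B \<and> E a a'")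
      case True
      then obtain a a' where aa: "a \<in> V" "a' \<in> V" "a \<notin> B" "a' \<notin> B" "E a a'" by blast
      have ax: "a \<noteq> x0" using aa B1 by auto
      have ax': "a' \<noteq> x0"
      proof
        assume "a' = x0"
        hence "E x0 a" using Esym[OF aa(5)] by simp
        thus False using B1 aa(3) by blast
      qed
      obtain b where b: "E x0 b" "E b a" using inA aa ax by blast
      obtain b' where b': "E x0 b'" "E b' a'" using inA aa ax' by blast
      have bb: "b \<noteq> b'"
      proof
        assume "b = b'"
        thus False using notri[OF aa(5) Esym[OF b'(2)]] b(2) by simp
      qed
      have bV: "b \<in> V" "b' \<in> V" using b b' EV2 by auto
      have bB: "b \<in> B" "b' \<in> B" using b b' B1 by auto
      have ne: "b \<noteq> a" "b \<noteq> a'" "a \<noteq> a'" using bB aa Eneq[OF aa(5)] by auto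
      have wx: "x0 \<in> V - {b, a, a'}" using x0V Eneq[OF b(1)] ax ax' by auto
      have wb: "b' \<in> V - {b, a, a'}" using bV bb bB aa by auto
      have "d b x0 = 1" using d1[OF bV(1) x0V] Esym[OF b(1)] by simp
      moreover have "\<not> E a x0" "\<not> E a' x0" using B1 aa(3,4) Esym by blast+
      hence "d a x0 \<noteq> 1" "d a' x0 \<noteq> 1" using d1[OF aa(1) x0V] d1[OF aa(2) x0V] by simp_all
      moreover have "d a' b' = 1" using d1[OF aa(2) bV(2)] Esym[OF b'(2)] by simp
      moreover have "\<not> E a b'"
      proof
        assume h: "E a b'"
        show False by (rule notri[OF aa(5) Esym[OF b'(2)] Esym[OF h]])
      qed
      hence "d a b' \<noteq> 1" using d1[OF aa(1) bV(2)] by simp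
      ultimately have r: "d b x0 \<noteq> d a x0" "d b x0 \<noteq> d a' x0" "d a b' \<noteq> d a' b'" by simp_all
      have "\<exists>w\<in>V - {b, a, a'}. d b w \<noteq> d a w" using wx r by blast
      moreover have "\<exists>w\<in>V - {b, a, a'}. d b w \<noteq> d a' w" using wx r by blast
      moreover have "\<exists>w\<in>V - {b, a, a'}. d a w \<noteq> d a' w" using wb r by blast
      ultimately have "metric_dim V E \<le> card V - 3" by (rule RB3[OF bV(1) aa(1) aa(2) ne])
      thus ?thesis by blast
    next
      case False
      hence noA: "\<And>a a'. a \<in> V \<Longrightarrow> a' \<in> V \<Longrightarrow> a \<notin> B \<Longrightarrow> a' \<notin> B \<Longrightarrow> \<not> E a a'" by blast
      show ?thesis
      proof (cases "\<exists>a\<in>V. \<exists>b\<in>B. a \<notin> B \<and> \<not> E a b")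
        case True
        then obtain a b where ab: "a \<in> V" "b \<in> B" "a \<notin> B" "\<not> E a b" by blast
        have bV: "b \<in> V" and xb: "E x0 b" using ab B_def by auto
        have ax: "a \<noteq> x0" using ab(4) xb by auto
        obtain b' where b': "E x0 b'" "E b' a" using inA ab ax by blast
        have b'V: "b' \<in> V" using b' EV2 by auto
        have bb: "b \<noteq> b'"
        proof
          assume "b = b'"
          thus False using ab(4) Esym[OF b'(2)] by simp
        qed
        have ne: "x0 \<noteq> b'" "x0 \<noteq> a" "b' \<noteq> a" using Eneq[OF b'(1)] Eneq[OF b'(2)] ax by auto
        have wb: "b \<in> V - {x0, b', a}" using bV Eneq[OF xb] bb ab by auto
        have d1x: "d x0 b = 1" using d1 x0V bV xb by blast
        have nbb: "\<not> E b' b" using notri[OF b'(1) _ Esym[OF xb]] by blast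
        have "d b' b \<le> 2" using d_le2[OF Esym[OF b'(1)] xb] .
        moreover have "d b' b \<noteq> 0" using d0 b'V bV bb by metis
        moreover have "d b' b \<noteq> 1" using d1 b'V bV nbb by blast
        ultimately have d2b: "d b' b = 2" by linarith
        have nab: "d a b \<noteq> 1" using d1 ab bV by blast
        have "d a b \<noteq> 2"
        proof
          assume "d a b = 2"
          then obtain y where y: "E a y" "E y b" using d2 ab bV by blast
          have "y \<notin> B" using notri[OF _ y(2) Esym[OF xb]] B_def by auto
          thus False using noA[OF ab(1) _ ab(3)] y EV2 by blast
        qed
        hence r: "d x0 b \<noteq> d b' b" "d x0 b \<noteq> d a b" "d b' b \<noteq> d a b" using d1x d2b nab by simp_all
        have "\<exists>w\<in>V - {x0, b', a}. d x0 w \<noteq> d b' w" using wb r by blast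
        moreover have "\<exists>w\<in>V - {x0, b', a}. d x0 w \<noteq> d a w" using wb r by blast
        moreover have "\<exists>w\<in>V - {x0, b', a}. d b' w \<noteq> d a w" using wb r by blast
        ultimately have "metric_dim V E \<le> card V - 3" by (rule RB3[OF x0V b'V ab(1) ne])
        thus ?thesis by blast
      next
        case False
        hence allAB: "\<And>a b. a \<in> V \<Longrightarrow> b \<in> B \<Longrightarrow> a \<notin> B \<Longrightarrow> E a b" by blast
        have noB: "\<not> E b b'" if "b \<in> B" "b' \<in> B" for b b'
        proof
          assume h: "E b b'"
          have "E x0 b" "E x0 b'" using that B_def by auto
          thus False using notri[OF _ h Esym] by blast
        qed
        have BV: "B \<subseteq> V" using B_def by auto
        have ech: "E x y \<longleftrightarrow> (x \<notin> B \<and> y \<in> B) \<or> (x \<in> B \<and> y \<notin> B)" if "x \<in> V" "y \<in> V" for x y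
        proof (cases "x \<in> B"; cases "y \<in> B")
          assume "x \<in> B" "y \<in> B" thus ?thesis using noB by blast
        next
          assume "x \<in> B" "y \<notin> B" thus ?thesis using allAB[of y x] that Esym by blast
        next
          assume "x \<notin> B" "y \<in> B" thus ?thesis using allAB[of x y] that by blast
        next
          assume "x \<notin> B" "y \<notin> B" thus ?thesis using noA that by blast
        qed
        let ?A = "V - B"
        have fA: "finite ?A" "finite B" using finV BV finite_subset by auto
        have "c ! 2 \<notin> B"
        proof
          assume "c ! 2 \<in> B"
          hence "E (c ! 0) (c ! 2)" using B_def x0_def by simp
          thus False using notri[OF e01 e12 Esym] by blast
        qed
        moreover have "x0 \<notin> B" using B_def Eirr by auto
        ultimately have "{x0, c ! 2} \<subseteq> ?A" using x0V cV[of 2] by auto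
        moreover have "x0 \<noteq> c ! 2" using cne[of 0 2] x0_def by simp
        ultimately have rA: "2 \<le> card ?A" using card_mono[OF fA(1), of "{x0, c ! 2}"] by simp
        have "{c ! 1, c ! 3} \<subseteq> B" using e01 e30 Esym B_def x0_def cV by auto
        moreover have "c ! 1 \<noteq> c ! 3" using cne[of 1 3] by simp
        ultimately have rB: "2 \<le> card B" using card_mono[OF fA(2), of "{c ! 1, c ! 3}"] by simp
        obtain hA where hA: "bij_betw hA ?A {0..<card ?A}" using ex_bij_betw_finite_nat[OF fA(1)] by blast
        obtain hB where hB: "bij_betw hB B {0..<card B}" using ex_bij_betw_finite_nat[OF fA(2)] by blast
        define F where "F x = (if x \<in> B then (hB x, 1::nat) else (hA x, 0))" for x
        let ?r = "card ?A" and ?s = "card B"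
        have hAi: "inj_on hA ?A" and hAs: "hA ` ?A = {0..<?r}" using hA unfolding bij_betw_def by auto
        have hBi: "inj_on hB B" and hBs: "hB ` B = {0..<?s}" using hB unfolding bij_betw_def by auto
        have FB: "\<And>x. x \<in> B \<Longrightarrow> F x = (hB x, 1)" and FA: "\<And>x. x \<notin> B \<Longrightarrow> F x = (hA x, 0)"
          unfolding F_def by auto
        have injF: "inj_on F V"
        proof
          fix x y assume xy: "x \<in> V" "y \<in> V" "F x = F y"
          show "x = y"
          proof (cases "x \<in> B"; cases "y \<in> B")
            assume h: "x \<in> B" "y \<in> B"
            hence "hB x = hB y" using xy(3) FB by simp
            thus ?thesis using inj_onD[OF hBi _ h] by blast
          next
            assume h: "x \<notin> B" "y \<notin> B"
            hence "hA x = hA y" using xy(3) FA by simp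
            moreover have "x \<in> ?A" "y \<in> ?A" using h xy by auto
            ultimately show ?thesis using inj_onD[OF hAi] by blast
          next
            assume h: "x \<in> B" "y \<notin> B"
            thus ?thesis using xy(3) FA FB by simp
          next
            assume h: "x \<notin> B" "y \<in> B"
            thus ?thesis using xy(3) FA FB by simp
          qed
        qed
        have imgF: "F ` V = {0..<?r} \<times> {0} \<union> {0..<?s} \<times> {1}"
        proof
          show "F ` V \<subseteq> {0..<?r} \<times> {0} \<union> {0..<?s} \<times> {1}"
          proof
            fix p assume "p \<in> F ` V"
            then obtain x where x: "x \<in> V" "p = F x" by blast
            show "p \<in> {0..<?r} \<times> {0} \<union> {0..<?s} \<times> {1}"
            proof (cases "x \<in> B")
              case True
              hence "hB x \<in> {0..<?s}" using hBs by blast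
              thus ?thesis using x FB True by simp
            next
              case False
              hence "x \<in> ?A" using x by simp
              hence "hA x \<in> {0..<?r}" using hAs by blast
              thus ?thesis using x FA False by simp
            qed
          qed
          show "{0..<?r} \<times> {0} \<union> {0..<?s} \<times> {1} \<subseteq> F ` V"
          proof
            fix p :: "nat \<times> nat" assume p: "p \<in> {0..<?r} \<times> {0} \<union> {0..<?s} \<times> {1}"
            obtain i k where ik: "p = (i, k)" by fastforce
            show "p \<in> F ` V"
            proof (cases "k = 0")
              case True
              hence "i \<in> hA ` ?A" using p ik hAs by auto
              then obtain a where a: "a \<in> ?A" "hA a = i" by blast
              hence "F a = p" using True ik FA by simp
              thus ?thesis using a by blast
            next
              case False
              hence "i \<in> hB ` B" using p ik hBs by auto
              then obtain b where b: "b \<in> B" "hB b = i" by blast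
              moreover have "k = 1" using p ik False by auto
              ultimately have "F b = p" using ik FB by simp
              thus ?thesis using b BV by blast
            qed
          qed
        qed
        have bF: "bij_betw F V (fst (complete_bipartite ?r ?s))"
          unfolding bij_betw_def complete_bipartite_def fst_conv using injF imgF by blast
        have "\<forall>x\<in>V. \<forall>y\<in>V. E x y \<longleftrightarrow> snd (complete_bipartite ?r ?s) (F x) (F y)"
        proof (intro ballI)
          fix x y assume x: "x \<in> V" and y: "y \<in> V"
          have ra: "\<And>z. z \<in> ?A \<Longrightarrow> hA z < ?r" using hA by (auto simp: bij_betw_def)
          have rb: "\<And>z. z \<in> B \<Longrightarrow> hB z < ?s" using hB by (auto simp: bij_betw_def)
          have cb: "\<And>i a j b. snd (complete_bipartite ?r ?s) (i, a) (j, b) = ((a = 0 \<and> i < ?r \<and> b = 1 \<and> j < ?s) \<or> (a = 1 \<and> i < ?s \<and> b = 0 \<and> j < ?r))"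
            by (simp add: complete_bipartite_def)
          show "E x y \<longleftrightarrow> snd (complete_bipartite ?r ?s) (F x) (F y)"
          proof (cases "x \<in> B"; cases "y \<in> B")
            assume "x \<in> B" "y \<in> B" thus ?thesis using ech[OF x y] by (simp add: FB cb)
          next
            assume "x \<in> B" "y \<notin> B" thus ?thesis using ech[OF x y] ra[of y] rb[of x] y by (simp add: FA FB cb)
          next
            assume "x \<notin> B" "y \<in> B" thus ?thesis using ech[OF x y] ra[of x] rb[of y] x by (simp add: FA FB cb)
          next
            assume "x \<notin> B" "y \<notin> B" thus ?thesis using ech[OF x y] by (simp add: FA cb)
          qed
        qed
        hence "graph_iso V E (fst (complete_bipartite ?r ?s)) (snd (complete_bipartite ?r ?s))"
          unfolding graph_iso_def using bF by blast
        thus ?thesis using rA rB by blast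
      qed
    qed
  qed
qed


lemma two_el: "2 \<le> card X \<Longrightarrow> \<exists>u v. u \<in> X \<and> v \<in> X \<and> u \<noteq> v"
proof -
  assume "2 \<le> card X"
  hence "Suc 1 \<le> card X" by simp
  then obtain a Y where "X = insert a Y" "a \<notin> Y" "1 \<le> card Y" "finite Y" unfolding card_le_Suc_iff by blast
  moreover hence "Y \<noteq> {}" by auto
  ultimately show ?thesis by blast
qed

lemma three_el: "3 \<le> card X \<Longrightarrow> \<exists>u v w. u \<in> X \<and> v \<in> X \<and> w \<in> X \<and> u \<noteq> v \<and> u \<noteq> w \<and> v \<noteq> w"
proof -
  assume "3 \<le> card X"
  hence "Suc 2 \<le> card X" by simp
  then obtain a Y where Y: "X = insert a Y" "a \<notin> Y" "2 \<le> card Y" unfolding card_le_Suc_iff by blast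
  then obtain u v where "u \<in> Y" "v \<in> Y" "u \<noteq> v" using two_el by blast
  thus ?thesis using Y by blast
qed

lemma lb_Kn: assumes iso: "graph_iso V E (fst (complete_graph (card V))) (snd (complete_graph (card V)))"
  shows "card V - 1 \<le> metric_dim V E"
proof -
  obtain f where f: "bij_betw f V {0..<card V}" and e: "\<forall>x\<in>V. \<forall>y\<in>V. E x y \<longleftrightarrow> snd (complete_graph (card V)) (f x) (f y)"
    using iso unfolding graph_iso_def complete_graph_def by auto
  have ex: "E x y \<longleftrightarrow> x \<noteq> y" if "x \<in> V" "y \<in> V" for x y
  proof -
    have "f x < card V" "f y < card V" using f that by (auto simp: bij_betw_def)
    moreover have "f x = f y \<longleftrightarrow> x = y" using f that by (auto simp: bij_betw_def inj_on_def)
    ultimately show ?thesis using e that by (auto simp: complete_graph_def)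
  qed
  show ?thesis
  proof (rule md_ge, rule ccontr)
    fix W assume r: "resolving_set V E W" and "\<not> card V - 1 \<le> card W"
    hence WV: "W \<subseteq> V" and lt: "card W + 2 \<le> card V" using r by (auto simp: resolving_set_def)
    have "card (V - W) = card V - card W" using WV finV by (simp add: card_Diff_subset finite_subset)
    hence "2 \<le> card (V - W)" using lt by simp
    then obtain u v where uv: "u \<in> V - W" "v \<in> V - W" "u \<noteq> v" using two_el by blast
    have "\<forall>z. z \<noteq> u \<and> z \<noteq> v \<longrightarrow> (E u z \<longleftrightarrow> E v z)"
      using ex uv EV2 by blast
    thus False using twin_nres[of u v W] uv r by blast
  qed
qed

lemma bip_side: assumes iso: "graph_iso V E (fst (complete_bipartite r s)) (snd (complete_bipartite r s))"
  obtains h :: "'a \<Rightarrow> nat" where "\<And>x. x \<in> V \<Longrightarrow> h x \<le> 1"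
    "\<And>x y. x \<in> V \<Longrightarrow> y \<in> V \<Longrightarrow> E x y \<longleftrightarrow> h x \<noteq> h y"
proof -
  obtain f where f: "bij_betw f V (fst (complete_bipartite r s))"
    and e: "\<forall>x\<in>V. \<forall>y\<in>V. E x y \<longleftrightarrow> snd (complete_bipartite r s) (f x) (f y)"
    using iso unfolding graph_iso_def by auto
  have fm: "\<And>x. x \<in> V \<Longrightarrow> f x \<in> {0..<r} \<times> {0} \<union> {0..<s} \<times> {1}"
    using f unfolding bij_betw_def complete_bipartite_def by auto
  have cb: "\<And>i a j b. snd (complete_bipartite r s) (i, a) (j, b) = ((a = 0 \<and> i < r \<and> b = 1 \<and> j < s) \<or> (a = 1 \<and> i < s \<and> b = 0 \<and> j < r))"
    by (simp add: complete_bipartite_def)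
  show ?thesis
  proof (rule that[of "\<lambda>x. snd (f x)"])
    show "\<And>x. x \<in> V \<Longrightarrow> snd (f x) \<le> 1" using fm by fastforce
    fix x y assume x: "x \<in> V" and y: "y \<in> V"
    obtain i a where ia: "f x = (i, a)" by fastforce
    obtain j b where jb: "f y = (j, b)" by fastforce
    have "(i, a) \<in> {0..<r} \<times> {0} \<union> {0..<s} \<times> {1}" "(j, b) \<in> {0..<r} \<times> {0} \<union> {0..<s} \<times> {1}"
      using fm x y ia jb by metis+
    thus "E x y \<longleftrightarrow> snd (f x) \<noteq> snd (f y)" using e x y ia jb cb by auto
  qed
qed

lemma lb_Krs: assumes iso: "graph_iso V E (fst (complete_bipartite r s)) (snd (complete_bipartite r s))"
  and hc: "has_cycle V E"
  shows "card V - 2 \<le> metric_dim V E" "4 \<le> girth V E"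
proof -
  obtain h :: "'a \<Rightarrow> nat" where h1: "\<And>x. x \<in> V \<Longrightarrow> h x \<le> 1"
    and he: "\<And>x y. x \<in> V \<Longrightarrow> y \<in> V \<Longrightarrow> E x y \<longleftrightarrow> h x \<noteq> h y"
    using bip_side[OF iso] by blast
  show "card V - 2 \<le> metric_dim V E"
  proof (rule md_ge, rule ccontr)
    fix W assume r: "resolving_set V E W" and "\<not> card V - 2 \<le> card W"
    hence WV: "W \<subseteq> V" and lt: "card W + 3 \<le> card V" using r by (auto simp: resolving_set_def)
    have "card (V - W) = card V - card W" using WV finV by (simp add: card_Diff_subset finite_subset)
    hence "3 \<le> card (V - W)" using lt by simp
    then obtain p q t where pqt: "p \<in> V - W" "q \<in> V - W" "t \<in> V - W" "p \<noteq> q" "p \<noteq> t" "q \<noteq> t"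
      using three_el by blast
    have "\<exists>u v. u \<in> V - W \<and> v \<in> V - W \<and> u \<noteq> v \<and> h u = h v"
    proof -
      have "h p \<le> 1" "h q \<le> 1" "h t \<le> 1" using h1 pqt by auto
      hence "h p = h q \<or> h p = h t \<or> h q = h t" by linarith
      thus ?thesis using pqt by blast
    qed
    then obtain u v where uv: "u \<in> V - W" "v \<in> V - W" "u \<noteq> v" "h u = h v" by blast
    have "\<forall>z. z \<noteq> u \<and> z \<noteq> v \<longrightarrow> (E u z \<longleftrightarrow> E v z)"
    proof (intro allI impI)
      fix z assume "z \<noteq> u \<and> z \<noteq> v"
      show "E u z \<longleftrightarrow> E v z"
      proof (cases "z \<in> V")
        case True thus ?thesis using he uv by auto
      next
        case False thus ?thesis using EV2 by blast
      qed
    qed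
    thus False using twin_nres[of u v W] uv r by blast
  qed
  obtain c where c: "is_cycle V E c" "length c = girth V E" "distinct c" "3 \<le> length c"
    using girth_cycle[OF hc] by blast
  show "4 \<le> girth V E"
  proof (rule ccontr)
    assume "\<not> 4 \<le> girth V E"
    hence l3: "length c = 3" using c by simp
    have "E (c ! 0) (c ! 1)" "E (c ! 1) (c ! 2)" "E (c ! 2) (c ! 0)"
      using cyc_edge[OF c(1), of 0] cyc_edge[OF c(1), of 1] cyc_edge[OF c(1), of 2] l3
      by (simp_all add: numeral_2_eq_2)
    moreover have "c ! 0 \<in> V" "c ! 1 \<in> V" "c ! 2 \<in> V" using cyc_V[OF c(1)] l3 by auto
    ultimately have "h (c ! 0) \<noteq> h (c ! 1)" "h (c ! 1) \<noteq> h (c ! 2)" "h (c ! 2) \<noteq> h (c ! 0)"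
      using he by blast+
    moreover have "h (c ! 0) \<le> 1" "h (c ! 1) \<le> 1" "h (c ! 2) \<le> 1" using h1 \<open>c ! 0 \<in> V\<close> \<open>c ! 1 \<in> V\<close> \<open>c ! 2 \<in> V\<close> by auto
    ultimately show False by linarith
  qed
qed


lemma Suc_mod_inj: "j < n \<Longrightarrow> j' < n \<Longrightarrow> Suc j mod n = Suc j' mod n \<Longrightarrow> j = j'"
  by (simp add: Suc_mod_eq split: if_splits)

lemma cn_basic: assumes iso: "graph_iso V E (fst (cycle_graph (card V))) (snd (cycle_graph (card V)))"
  obtains f where "bij_betw f V {0..<card V}" "\<And>x. x \<in> V \<Longrightarrow> f x < card V"
    "\<And>x y. x \<in> V \<Longrightarrow> y \<in> V \<Longrightarrow> f x = f y \<Longrightarrow> x = y"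
    "\<And>x y. x \<in> V \<Longrightarrow> y \<in> V \<Longrightarrow> E x y \<longleftrightarrow> f x \<noteq> f y \<and> (f y = Suc (f x) mod card V \<or> f x = Suc (f y) mod card V)"
proof -
  let ?n = "card V"
  obtain f where f: "bij_betw f V {0..<?n}"
    and e: "\<forall>x\<in>V. \<forall>y\<in>V. E x y \<longleftrightarrow> snd (cycle_graph ?n) (f x) (f y)"
    using iso unfolding graph_iso_def cycle_graph_def by auto
  have fl: "\<And>x. x \<in> V \<Longrightarrow> f x < ?n" using f by (auto simp: bij_betw_def)
  have finj: "\<And>x y. x \<in> V \<Longrightarrow> y \<in> V \<Longrightarrow> f x = f y \<Longrightarrow> x = y" using f by (auto simp: bij_betw_def inj_on_def)
  have cg: "\<And>i j. snd (cycle_graph ?n) i j = (i < ?n \<and> j < ?n \<and> i \<noteq> j \<and> (j = Suc i mod ?n \<or> i = Suc j mod ?n))"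
    by (simp add: cycle_graph_def)
  have ec: "E x y \<longleftrightarrow> f x \<noteq> f y \<and> (f y = Suc (f x) mod ?n \<or> f x = Suc (f y) mod ?n)"
    if "x \<in> V" "y \<in> V" for x y
    using e that fl[OF that(1)] fl[OF that(2)] unfolding cg by blast
  show ?thesis by (rule that[OF f fl finj ec])
qed

lemma cn_deg2: assumes iso: "graph_iso V E (fst (cycle_graph (card V))) (snd (cycle_graph (card V)))"
  and x: "x \<in> V" and y: "E x y1" "E x y2" "E x y3" and ne: "y1 \<noteq> y2" "y1 \<noteq> y3" "y2 \<noteq> y3"
  shows False
proof -
  let ?n = "card V"
  obtain f where "bij_betw f V {0..<card V}" and fl: "\<And>x. x \<in> V \<Longrightarrow> f x < ?n"
    and finj: "\<And>x y. x \<in> V \<Longrightarrow> y \<in> V \<Longrightarrow> f x = f y \<Longrightarrow> x = y"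
    and ec: "\<And>x y. x \<in> V \<Longrightarrow> y \<in> V \<Longrightarrow> E x y \<longleftrightarrow> f x \<noteq> f y \<and> (f y = Suc (f x) mod ?n \<or> f x = Suc (f y) mod ?n)"
    using cn_basic[OF iso] by blast
  have yV: "y1 \<in> V" "y2 \<in> V" "y3 \<in> V" using y EV2 by auto
  define P where "P y \<longleftrightarrow> f y = Suc (f x) mod ?n" for y
  have t: "P y \<or> f x = Suc (f y) mod ?n" if "y \<in> V" "E x y" for y
    using ec[OF x that(1)] that(2) unfolding P_def by blast
  have same: "ya = yb" if "ya \<in> V" "yb \<in> V" "E x ya" "E x yb" "P ya \<longleftrightarrow> P yb" for ya yb
  proof (cases "P ya")
    case True
    hence "f ya = f yb" using that unfolding P_def by simp
    thus ?thesis using finj that by blast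
  next
    case False
    hence "f x = Suc (f ya) mod ?n" "f x = Suc (f yb) mod ?n" using t that by blast+
    hence "Suc (f ya) mod ?n = Suc (f yb) mod ?n" by simp
    hence "f ya = f yb" by (rule Suc_mod_inj[OF fl[OF that(1)] fl[OF that(2)]])
    thus ?thesis using finj that by blast
  qed
  have "(P y1 \<longleftrightarrow> P y2) \<or> (P y1 \<longleftrightarrow> P y3) \<or> (P y2 \<longleftrightarrow> P y3)" by blast
  thus False
  proof (elim disjE)
    assume "P y1 \<longleftrightarrow> P y2" thus False using same[OF yV(1) yV(2) y(1) y(2)] ne(1) by blast
  next
    assume "P y1 \<longleftrightarrow> P y3" thus False using same[OF yV(1) yV(3) y(1) y(3)] ne(2) by blast
  next
    assume "P y2 \<longleftrightarrow> P y3" thus False using same[OF yV(2) yV(3) y(2) y(3)] ne(3) by blast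
  qed
qed

lemma cn_nb2: assumes iso: "graph_iso V E (fst (cycle_graph (card V))) (snd (cycle_graph (card V)))"
  and hc: "has_cycle V E" and x: "x \<in> V"
  shows "\<exists>u v. E x u \<and> E x v \<and> u \<noteq> v"
proof -
  let ?n = "card V"
  obtain f where f: "bij_betw f V {0..<card V}" and fl: "\<And>x. x \<in> V \<Longrightarrow> f x < ?n"
    and finj: "\<And>x y. x \<in> V \<Longrightarrow> y \<in> V \<Longrightarrow> f x = f y \<Longrightarrow> x = y"
    and ec: "\<And>x y. x \<in> V \<Longrightarrow> y \<in> V \<Longrightarrow> E x y \<longleftrightarrow> f x \<noteq> f y \<and> (f y = Suc (f x) mod ?n \<or> f x = Suc (f y) mod ?n)"
    using cn_basic[OF iso] by blast
  have n3: "3 \<le> ?n" using girth_le_card[OF hc] girth_ge3[OF hc] by simp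
  define i where "i = f x"
  define p where "p = (if i = 0 then ?n - 1 else i - 1)"
  define q where "q = (if Suc i = ?n then 0 else Suc i)"
  have il: "i < ?n" using fl x i_def by simp
  have qm: "Suc i mod ?n = q" unfolding q_def using il by (rule Suc_mod_eq)
  have pl: "p < ?n" "q < ?n" using il n3 unfolding p_def q_def by auto
  have img: "f ` V = {0..<?n}" using f by (simp add: bij_betw_def)
  obtain u where u: "u \<in> V" "f u = q" using pl(2) img by (metis atLeastLessThan_iff imageE le0)
  obtain v where v: "v \<in> V" "f v = p" using pl(1) img by (metis atLeastLessThan_iff imageE le0)
  have sp: "Suc p mod ?n = i" using il n3 unfolding p_def by (auto simp: Suc_mod_eq)
  have qi: "q \<noteq> i" using il n3 unfolding q_def by auto
  have pi: "p \<noteq> i" using il n3 unfolding p_def by auto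
  have pq: "p \<noteq> q" using il n3 unfolding p_def q_def by auto
  have "E x u" using ec[OF x u(1)] u qi qm i_def by auto
  moreover have "E x v" using ec[OF x v(1)] v pi sp i_def by auto
  moreover have "u \<noteq> v" using u v pq by auto
  ultimately show ?thesis by blast
qed

lemma lb_Cn_md: assumes iso: "graph_iso V E (fst (cycle_graph (card V))) (snd (cycle_graph (card V)))"
  and hc: "has_cycle V E"
  shows "2 \<le> metric_dim V E"
proof (rule md_ge, rule ccontr)
  fix W assume r: "resolving_set V E W" and "\<not> 2 \<le> card W"
  hence WV: "W \<subseteq> V" and c1: "card W \<le> 1" using r by (auto simp: resolving_set_def)
  have fW: "finite W" using WV finV finite_subset by blast
  have n3: "3 \<le> card V" using girth_le_card[OF hc] girth_ge3[OF hc] by simp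
  show False
  proof (cases "W = {}")
    case True
    obtain u v where "u \<in> V" "v \<in> V" "u \<noteq> v" using two_el[of V] n3 by auto
    thus False using r True unfolding resolving_set_def by blast
  next
    case False
    then obtain w where w: "w \<in> W" by blast
    have Ww: "W = {w}"
    proof (rule ccontr)
      assume "W \<noteq> {w}"
      then obtain w' where "w' \<in> W" "w' \<noteq> w" using w by blast
      hence "card {w, w'} \<le> card W" using w fW by (intro card_mono) auto
      thus False using c1 \<open>w' \<noteq> w\<close> by simp
    qed
    have wV: "w \<in> V" using WV Ww by auto
    obtain u v where uv: "E w u" "E w v" "u \<noteq> v" using cn_nb2[OF iso hc wV] by blast
    have uvV: "u \<in> V" "v \<in> V" using uv EV2 by auto
    have "d u w = 1" using d1[OF uvV(1) wV] Esym[OF uv(1)] by simp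
    moreover have "d v w = 1" using d1[OF uvV(2) wV] Esym[OF uv(2)] by simp
    moreover obtain w' where "w' \<in> W" "d u w' \<noteq> d v w'"
      using r uvV uv(3) unfolding resolving_set_def by blast
    ultimately show False using Ww by auto
  qed
qed

lemma lb_Cn_g: assumes iso: "graph_iso V E (fst (cycle_graph (card V))) (snd (cycle_graph (card V)))"
  and hc: "has_cycle V E"
  shows "card V \<le> girth V E"
proof -
  obtain c where c: "is_cycle V E c" "length c = girth V E" "distinct c" "3 \<le> length c"
    using girth_cycle[OF hc] by blast
  let ?l = "length c"
  have closed: "z \<in> set c" if y: "y \<in> set c" and e: "E y z" for y z
  proof (rule ccontr)
    assume zn: "z \<notin> set c"
    obtain k where k: "k < ?l" "y = c ! k" using y by (auto simp: in_set_conv_nth)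
    define p where "p = (if k = 0 then ?l - 1 else k - 1)"
    have pl: "p < ?l" using k unfolding p_def by auto
    have "Suc p mod ?l = k" using k c(4) unfolding p_def by (auto simp: Suc_mod_eq)
    hence "E (c ! p) (c ! k)" using cyc_edge[OF c(1) pl] by simp
    hence e1: "E y (c ! p)" using k Esym by simp
    have e2: "E y (c ! (Suc k mod ?l))" using cyc_edge[OF c(1) k(1)] k by simp
    have "Suc k mod ?l \<noteq> p" using k c(4) unfolding p_def by (auto simp: Suc_mod_eq)
    moreover have sl: "Suc k mod ?l < ?l"
    proof -
      have "0 < ?l" using k by arith
      thus ?thesis by simp
    qed
    ultimately have n1: "c ! (Suc k mod ?l) \<noteq> c ! p" using c(3) pl by (simp add: nth_eq_iff_index_eq)
    have n2: "z \<noteq> c ! p" "z \<noteq> c ! (Suc k mod ?l)" using zn pl sl by auto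
    have "y \<in> V" using e EV1 by auto
    from cn_deg2[OF iso this e1 e2 e n1[symmetric] n2[symmetric]] show False .
  qed
  have "V \<subseteq> set c"
  proof
    fix v assume v: "v \<in> V"
    have l0: "0 < length c" using c(4) by linarith
    have c0: "c ! 0 \<in> set c" "c ! 0 \<in> V" using nth_mem[OF l0] cyc_V[OF c(1) l0] by auto
    obtain g where g: "fw (c ! 0) v (d (c ! 0) v) g" using dist_fw c0(2) v by blast
    have "g i \<in> set c" if "i \<le> d (c ! 0) v" for i
      using that
    proof (induction i)
      case 0 thus ?case using g c0 by (simp add: fw_def)
    next
      case (Suc i)
      hence "g i \<in> set c" by simp
      moreover have "E (g i) (g (Suc i))" using g Suc.prems unfolding fw_def by auto
      ultimately show ?case using closed by blast
    qed
    hence "g (d (c ! 0) v) \<in> set c" by simp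
    thus "v \<in> set c" using g by (simp add: fw_def)
  qed
  hence "card V \<le> card (set c)" by (simp add: card_mono)
  thus ?thesis using c distinct_card by metis
qed

end

theorem theorem2p5:
  fixes V :: "'a set" and E :: "'a \<Rightarrow> 'a \<Rightarrow> bool"
  assumes "simple_graph V E" and "connected_graph V E" and "has_cycle V E"
  shows "metric_dim V E = card V - girth V E + 2 \<longleftrightarrow>
    (graph_iso V E (fst (cycle_graph (card V))) (snd (cycle_graph (card V)))
     \<or> (card V \<ge> 3 \<and> graph_iso V E (fst (complete_graph (card V))) (snd (complete_graph (card V))))
     \<or> (\<exists>r s. r \<ge> 2 \<and> s \<ge> 2 \<and>
          graph_iso V E (fst (complete_bipartite r s)) (snd (complete_bipartite r s))))"
proof -
  interpret sg V E using assms(1,2) by unfold_locales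
  have hc: "has_cycle V E" by (rule assms(3))
  have g3: "3 \<le> girth V E" using girth_ge3[OF hc] .
  have gn: "girth V E \<le> card V" using girth_le_card[OF hc] .
  have up: "metric_dim V E \<le> card V - girth V E + 2" using upper[OF hc] .
  show ?thesis
  proof
    assume eq: "metric_dim V E = card V - girth V E + 2"
    consider "girth V E = 3" | "girth V E = 4" | "5 \<le> girth V E" using g3 by linarith
    thus "graph_iso V E (fst (cycle_graph (card V))) (snd (cycle_graph (card V)))
     \<or> (card V \<ge> 3 \<and> graph_iso V E (fst (complete_graph (card V))) (snd (complete_graph (card V))))
     \<or> (\<exists>r s. r \<ge> 2 \<and> s \<ge> 2 \<and>
          graph_iso V E (fst (complete_bipartite r s)) (snd (complete_bipartite r s)))"
    proof cases
      case 1
      from case3[OF hc 1] show ?thesis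
      proof
        assume "metric_dim V E \<le> card V - 2"
        thus ?thesis using eq 1 gn by linarith
      qed blast
    next
      case 2
      from case4[OF hc 2] show ?thesis
      proof
        assume "metric_dim V E \<le> card V - 3"
        thus ?thesis using eq 2 gn by linarith
      qed blast
    next
      case 3
      from case5[OF hc 3] show ?thesis
      proof
        assume "metric_dim V E \<le> card V - girth V E + 1"
        thus ?thesis using eq by linarith
      qed blast
    qed
  next
    assume "graph_iso V E (fst (cycle_graph (card V))) (snd (cycle_graph (card V)))
     \<or> (card V \<ge> 3 \<and> graph_iso V E (fst (complete_graph (card V))) (snd (complete_graph (card V))))
     \<or> (\<exists>r s. r \<ge> 2 \<and> s \<ge> 2 \<and>
          graph_iso V E (fst (complete_bipartite r s)) (snd (complete_bipartite r s)))"
    hence "card V - girth V E + 2 \<le> metric_dim V E"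
    proof (elim disjE conjE exE)
      assume i: "graph_iso V E (fst (cycle_graph (card V))) (snd (cycle_graph (card V)))"
      have "2 \<le> metric_dim V E" using lb_Cn_md[OF i hc] .
      moreover have "card V \<le> girth V E" using lb_Cn_g[OF i hc] .
      ultimately show ?thesis using gn by linarith
    next
      assume i: "graph_iso V E (fst (complete_graph (card V))) (snd (complete_graph (card V)))"
      have "card V - 1 \<le> metric_dim V E" using lb_Kn[OF i] .
      thus ?thesis using g3 gn by linarith
    next
      fix r s assume i: "graph_iso V E (fst (complete_bipartite r s)) (snd (complete_bipartite r s))"
      have "card V - 2 \<le> metric_dim V E" "4 \<le> girth V E" using lb_Krs[OF i hc] by auto
      thus ?thesis using gn by linarith
    qed
    thus "metric_dim V E = card V - girth V E + 2" using up by linarith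
  qed
qed

end
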